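(* Let $\Gamma$ be an absolutely irreducible finite group, $\theta:\Gamma\to O(\mathbb{R}^d)$ a point group, and $m_\rho$ the multiplicity of $\rho\in\tilde\Gamma$ in $\theta$. Let $f:\mathcal{C}_\theta(V)\to\mathcal{K}_{+,\Gamma}$, $q\mapsto\Psi(Q^\top Q)$, where $Q^\top Q$ is the Gram matrix of $q$. Then \[f(\mathcal{C}_\theta(V))=\{X\in\mathcal{K}_{+,\Gamma}:\operatorname{rank}X_\rho\leq m_\rho\ (\rho\in\tilde\Gamma)\}.\]
   Context: $\Gamma$ is absolutely irreducible if every real irreducible representation remains irreducible over $\mathbb{C}$. $\tilde\Gamma$ is a set of representatives of equivalence classes of real irreducible representations, each chosen as an orthogonal matrix representation $\rho:\Gamma\to O(\mathbb{R}^{d_\rho})$, $\mathrm{tri}$ the trivial one. $\hat V$ is a finite set with $\hat n$ elements, $V=\Gamma\times\hat V$, and $\mathbb{R}^V$ is identified with $\mathbb{R}^\Gamma\otimes\mathbb{R}^{\hat V}$. The right regular representation is $R(\gamma)=\sum_{\alpha\in\Gamma}\mathbf{e}_\alpha\mathbf{e}_{\alpha\gamma}^\top$. Let $Z\in O(\mathbb{R}^\Gamma)$ be an orthogonal matrix with $Z^\top R(\gamma)Z=\bigoplus_{\rho\in\tilde\Gamma}I_{d_\rho}\otimes\rho(\gamma)$ for all $\gamma$ (trivial block first), and $\Psi(X)=(Z\otimes I_{\hat n})^\top X(Z\otimes I_{\hat n})$. $(\mathcal{L}^V)^\Gamma_+$ is the set of positive semidefinite symmetric $V\times V$ matrices $L$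 with $L\mathbf{1}_V=\mathbf{0}$ and $L[(\alpha,u),(\beta,v)]=L[(\gamma\alpha,u),(\gamma\beta,v)]$ for all $\alpha,\beta,\gamma,u,v$; $\mathcal{K}_{+,\Gamma}=\Psi((\mathcal{L}^V)^\Gamma_+)$. Every $X\in\mathcal{K}_{+,\Gamma}$ has the form $X=\bigoplus_{\rho\in\tilde\Gamma}I_{d_\rho}\otimes X_\rho$ with $X_\rho$ a $d_\rho\hat n\times d_\rho\hat n$ matrix; this defines $X_\rho$. A configuration $q:V\to\mathbb{R}^d$ is compatible with $\theta$ if $\theta(\gamma)q_{(\alpha,v)}=q_{(\gamma\alpha,v)}$ for all $\gamma,\alpha\in\Gamma$, $v\in\hat V$; $\mathcal{C}_\theta(V)$ is the set of compatible $q$ with $\sum_{i\in V}q_i=\mathbf{0}$. $Q$ is the $d\times|V|$ matrix with columns $q_i$ (indexed consistently with $\mathbb{R}^\Gamma\otimes\mathbb{R}^{\hat V}$). $m_\rho$ is the number of copies of $\rho$ in a decomposition of the representation $\theta$ into real irreducible representations. *)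

theory Defs
  imports "HOL-Analysis.Analysis"
begin

section \<open>Matrix representations over a field (matrices as functions nat => nat => 'a, indices < n)\<close>

definition vecs :: "nat \<Rightarrow> (nat \<Rightarrow> 'a::field) set" where
  "vecs n = {x. \<forall>i\<ge>n. x i = 0}"

definition mvec :: "nat \<Rightarrow> (nat \<Rightarrow> nat \<Rightarrow> 'a::field) \<Rightarrow> (nat \<Rightarrow> 'a) \<Rightarrow> nat \<Rightarrow> 'a" where
  "mvec n M x = (\<lambda>i. if i < n then (\<Sum>j<n. M i j * x j) else 0)"

definition is_lsubspace :: "nat \<Rightarrow> (nat \<Rightarrow> 'a::field) set \<Rightarrow> bool" where
  "is_lsubspace n S \<longleftrightarrow> S \<subseteq> vecs n \<and> (\<lambda>_. 0) \<in> S \<and>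
     (\<forall>x\<in>S. \<forall>y\<in>S. (\<lambda>i. x i + y i) \<in> S) \<and> (\<forall>c. \<forall>x\<in>S. (\<lambda>i. c * x i) \<in> S)"

text \<open>A representation of the group (written additively, not necessarily commutative)
  by n x n matrices: a group homomorphism into GL_n.\<close>
definition is_rep :: "nat \<Rightarrow> ('g::group_add \<Rightarrow> nat \<Rightarrow> nat \<Rightarrow> 'a::field) \<Rightarrow> bool" where
  "is_rep n \<sigma> \<longleftrightarrow>
     (\<forall>\<gamma> \<delta>. \<forall>i<n. \<forall>j<n. \<sigma> (\<gamma> + \<delta>) i j = (\<Sum>k<n. \<sigma> \<gamma> i k * \<sigma> \<delta> k j)) \<and>
     (\<forall>i<n. \<forall>j<n. \<sigma> 0 i j = (if i = j then 1 else 0))"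

definition rep_irreducible :: "nat \<Rightarrow> ('g \<Rightarrow> nat \<Rightarrow> nat \<Rightarrow> 'a::field) \<Rightarrow> bool" where
  "rep_irreducible n \<sigma> \<longleftrightarrow> 0 < n \<and>
     (\<forall>S. is_lsubspace n S \<and> (\<forall>\<gamma>. \<forall>x\<in>S. mvec n (\<sigma> \<gamma>) x \<in> S)
          \<longrightarrow> S = {\<lambda>_. 0} \<or> S = vecs n)"

definition rep_equiv :: "nat \<Rightarrow> ('g \<Rightarrow> nat \<Rightarrow> nat \<Rightarrow> 'a::field) \<Rightarrow> nat \<Rightarrow> ('g \<Rightarrow> nat \<Rightarrow> nat \<Rightarrow> 'a) \<Rightarrow> bool" where
  "rep_equiv n \<sigma> m \<tau> \<longleftrightarrow> n = m \<and>
     (\<exists>T S. (\<forall>i<n. \<forall>j<n. (\<Sum>k<n. T i k * S k j) = (if i = j then 1 else 0)) \<and>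
            (\<forall>i<n. \<forall>j<n. (\<Sum>k<n. S i k * T k j) = (if i = j then 1 else 0)) \<and>
            (\<forall>\<gamma>. \<forall>i<n. \<forall>j<n. (\<Sum>k<n. T i k * \<sigma> \<gamma> k j) = (\<Sum>k<n. \<tau> \<gamma> i k * T k j)))"

definition is_orth_rep :: "nat \<Rightarrow> ('g::group_add \<Rightarrow> nat \<Rightarrow> nat \<Rightarrow> real) \<Rightarrow> bool" where
  "is_orth_rep n \<rho> \<longleftrightarrow> is_rep n \<rho> \<and>
     (\<forall>\<gamma>. \<forall>i<n. \<forall>j<n. (\<Sum>k<n. \<rho> \<gamma> k i * \<rho> \<gamma> k j) = (if i = j then 1 else 0))"

definition abs_irred_group :: "'g::group_add itself \<Rightarrow> bool" where
  "abs_irred_group _ \<longleftrightarrow>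
     (\<forall>n (\<sigma> :: 'g \<Rightarrow> nat \<Rightarrow> nat \<Rightarrow> real). is_rep n \<sigma> \<and> rep_irreducible n \<sigma> \<longrightarrow>
        rep_irreducible n (\<lambda>\<gamma> i j. complex_of_real (\<sigma> \<gamma> i j)))"

text \<open>Gamma-tilde: a set of pairs (d_rho, rho), one orthogonal representative for each
  equivalence class of real irreducible representations.\<close>
definition irrep_reps :: "(nat \<times> ('g::group_add \<Rightarrow> nat \<Rightarrow> nat \<Rightarrow> real)) set \<Rightarrow> bool" where
  "irrep_reps Rt \<longleftrightarrow>
     (\<forall>(n, \<rho>)\<in>Rt. is_orth_rep n \<rho> \<and> rep_irreducible n \<rho>) \<and>
     (\<forall>(n, \<rho>)\<in>Rt. \<forall>(m, \<tau>)\<in>Rt. rep_equiv n \<rho> m \<tau> \<longrightarrow> (n, \<rho>) = (m, \<tau>)) \<and>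
     (\<forall>n (\<sigma> :: 'g \<Rightarrow> nat \<Rightarrow> nat \<Rightarrow> real). is_rep n \<sigma> \<and> rep_irreducible n \<sigma> \<longrightarrow>
        (\<exists>(m, \<tau>)\<in>Rt. rep_equiv n \<sigma> m \<tau>))"

definition regR :: "'g::group_add \<Rightarrow> 'g \<Rightarrow> 'g \<Rightarrow> real" where
  "regR \<gamma> \<alpha> \<beta> = (if \<beta> = \<alpha> + \<gamma> then 1 else 0)"

text \<open>Index set of the block diagonal matrix (+)_rho I_{d_rho} (x) rho(gamma):
  triples (rho, a, b) with a, b < d_rho.\<close>
definition blockB :: "(nat \<times> 'f) set \<Rightarrow> ((nat \<times> 'f) \<times> nat \<times> nat) set" where
  "blockB Rt = {(r, a, b). r \<in> Rt \<and> a < fst r \<and> b < fst r}"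

definition blockrep :: "('g \<Rightarrow> ((nat \<times> ('g \<Rightarrow> nat \<Rightarrow> nat \<Rightarrow> real)) \<times> nat \<times> nat)
     \<Rightarrow> ((nat \<times> ('g \<Rightarrow> nat \<Rightarrow> nat \<Rightarrow> real)) \<times> nat \<times> nat) \<Rightarrow> real)" where
  "blockrep \<gamma> \<beta> \<beta>' = (case \<beta> of (r, a, b) \<Rightarrow> case \<beta>' of (r', a', b') \<Rightarrow>
      if r = r' \<and> a = a' then snd r \<gamma> b b' else 0)"

text \<open>Z is an orthogonal matrix with rows indexed by Gamma and columns by blockB Rt,
  such that Z^T R(gamma) Z = (+)_rho I_{d_rho} (x) rho(gamma).\<close>
definition decomp_matrix :: "(nat \<times> ('g::{finite,group_add} \<Rightarrow> nat \<Rightarrow> nat \<Rightarrow> real)) set \<Rightarrow>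
     ('g \<Rightarrow> ((nat \<times> ('g \<Rightarrow> nat \<Rightarrow> nat \<Rightarrow> real)) \<times> nat \<times> nat) \<Rightarrow> real) \<Rightarrow> bool" where
  "decomp_matrix Rt Z \<longleftrightarrow>
     (\<forall>\<alpha> \<alpha>'. (\<Sum>\<beta>\<in>blockB Rt. Z \<alpha> \<beta> * Z \<alpha>' \<beta>) = (if \<alpha> = \<alpha>' then 1 else 0)) \<and>
     (\<forall>\<beta>\<in>blockB Rt. \<forall>\<beta>'\<in>blockB Rt. (\<Sum>\<alpha>\<in>UNIV. Z \<alpha> \<beta> * Z \<alpha> \<beta>') = (if \<beta> = \<beta>' then 1 else 0)) \<and>
     (\<forall>\<gamma>. \<forall>\<beta>\<in>blockB Rt. \<forall>\<beta>'\<in>blockB Rt.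
        (\<Sum>\<alpha>\<in>UNIV. \<Sum>\<alpha>'\<in>UNIV. Z \<alpha> \<beta> * regR \<gamma> \<alpha> \<alpha>' * Z \<alpha>' \<beta>') = blockrep \<gamma> \<beta> \<beta>')"

text \<open>Psi(X) = (Z (x) I)^T X (Z (x) I), written out entrywise.\<close>
definition Psi :: "('g::finite \<Rightarrow> 'b \<Rightarrow> real) \<Rightarrow> ('g \<times> 'v \<Rightarrow> 'g \<times> 'v \<Rightarrow> real) \<Rightarrow> ('b \<times> 'v \<Rightarrow> 'b \<times> 'v \<Rightarrow> real)" where
  "Psi Z X = (\<lambda>(\<beta>1, u) (\<beta>2, w). \<Sum>\<alpha>1\<in>UNIV. \<Sum>\<alpha>2\<in>UNIV. Z \<alpha>1 \<beta>1 * X (\<alpha>1, u) (\<alpha>2, w) * Z \<alpha>2 \<beta>2)"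

definition LapGamma :: "('g::{finite,group_add} \<times> 'v::finite \<Rightarrow> 'g \<times> 'v \<Rightarrow> real) set" where
  "LapGamma = {L. (\<forall>i j. L i j = L j i) \<and>
      (\<forall>x. 0 \<le> (\<Sum>i\<in>UNIV. \<Sum>j\<in>UNIV. x i * L i j * x j)) \<and>
      (\<forall>i. (\<Sum>j\<in>UNIV. L i j) = 0) \<and>
      (\<forall>\<alpha> \<beta> \<gamma> u v. L (\<alpha>, u) (\<beta>, v) = L (\<gamma> + \<alpha>, u) (\<gamma> + \<beta>, v))}"

definition Kset :: "('g::{finite,group_add} \<Rightarrow> 'b \<Rightarrow> real) \<Rightarrow> ('b \<times> 'v::finite \<Rightarrow> 'b \<times> 'v \<Rightarrow> real) set" where
  "Kset Z = Psi Z ` LapGamma"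

text \<open>The block X_rho of X = (+)_rho I_{d_rho} (x) X_rho, indexed by pairs (b, v), b < d_rho.\<close>
definition Xblock :: "((('r \<times> nat \<times> nat) \<times> 'v) \<Rightarrow> (('r \<times> nat \<times> nat) \<times> 'v) \<Rightarrow> real) \<Rightarrow> 'r
     \<Rightarrow> (nat \<times> 'v) \<Rightarrow> (nat \<times> 'v) \<Rightarrow> real" where
  "Xblock X r = (\<lambda>(b, u) (b', w). X ((r, 0, b), u) ((r, 0, b'), w))"

definition mat_rank :: "'i set \<Rightarrow> 'j set \<Rightarrow> ('i \<Rightarrow> 'j \<Rightarrow> real) \<Rightarrow> nat" where
  "mat_rank I J M = Max {card S | S. S \<subseteq> J \<and> finite S \<and>
     (\<forall>c. (\<forall>i\<in>I. (\<Sum>j\<in>S. c j * M i j) = 0) \<longrightarrow> (\<forall>j\<in>S. c j = 0))}"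

definition point_group :: "('g::group_add \<Rightarrow> real^'d^'d) \<Rightarrow> bool" where
  "point_group \<theta> \<longleftrightarrow> (\<forall>\<gamma>. orthogonal_matrix (\<theta> \<gamma>)) \<and> (\<forall>\<gamma> \<delta>. \<theta> (\<gamma> + \<delta>) = \<theta> \<gamma> ** \<theta> \<delta>)"

definition compatible :: "('g::group_add \<Rightarrow> real^'d^'d) \<Rightarrow> ('g \<times> 'v \<Rightarrow> real^'d) \<Rightarrow> bool" where
  "compatible \<theta> q \<longleftrightarrow> (\<forall>\<gamma> \<alpha> v. \<theta> \<gamma> *v q (\<alpha>, v) = q (\<gamma> + \<alpha>, v))"

definition Ctheta :: "('g::{finite,group_add} \<Rightarrow> real^'d^'d) \<Rightarrow> ('g \<times> 'v::finite \<Rightarrow> real^'d) set" where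
  "Ctheta \<theta> = {q. compatible \<theta> q \<and> (\<Sum>i\<in>UNIV. q i) = 0}"

definition gram :: "('i \<Rightarrow> real^'d) \<Rightarrow> 'i \<Rightarrow> 'i \<Rightarrow> real" where
  "gram q = (\<lambda>i j. q i \<bullet> q j)"

definition theta_invariant :: "('g \<Rightarrow> real^'d^'d) \<Rightarrow> (real^'d) set \<Rightarrow> bool" where
  "theta_invariant \<theta> U \<longleftrightarrow> (\<forall>\<gamma>. (\<lambda>x. \<theta> \<gamma> *v x) ` U \<subseteq> U)"

definition irred_decomp :: "('g \<Rightarrow> real^'d^'d) \<Rightarrow> nat \<Rightarrow> (nat \<Rightarrow> (real^'d) set) \<Rightarrow> bool" where
  "irred_decomp \<theta> k W \<longleftrightarrow>
     (\<forall>i<k. subspace (W i) \<and> W i \<noteq> {0} \<and> theta_invariant \<theta> (W i) \<and>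
        (\<forall>U. subspace U \<and> U \<subseteq> W i \<and> theta_invariant \<theta> U \<longrightarrow> U = {0} \<or> U = W i)) \<and>
     (\<forall>x. \<exists>!w. (\<forall>i<k. w i \<in> W i) \<and> (\<forall>i\<ge>k. w i = 0) \<and> x = (\<Sum>i<k. w i))"

definition subrep_equiv :: "('g \<Rightarrow> real^'d^'d) \<Rightarrow> (real^'d) set \<Rightarrow> nat \<times> ('g \<Rightarrow> nat \<Rightarrow> nat \<Rightarrow> real) \<Rightarrow> bool" where
  "subrep_equiv \<theta> W r \<longleftrightarrow> (case r of (n, \<rho>) \<Rightarrow>
     \<exists>T :: nat \<Rightarrow> real^'d. inj_on T {..<n} \<and> independent (T ` {..<n}) \<and> span (T ` {..<n}) = W \<and>
        (\<forall>\<gamma>. \<forall>b<n. \<theta> \<gamma> *v T b = (\<Sum>b'<n. \<rho> \<gamma> b' b *\<^sub>R T b')))"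

definition rep_multiplicity :: "('g \<Rightarrow> real^'d^'d) \<Rightarrow> nat \<Rightarrow> (nat \<Rightarrow> (real^'d) set) \<Rightarrow>
     nat \<times> ('g \<Rightarrow> nat \<Rightarrow> nat \<Rightarrow> real) \<Rightarrow> nat" where
  "rep_multiplicity \<theta> k W r = card {i. i < k \<and> subrep_equiv \<theta> (W i) r}"

end

theory Submission
  imports Defs
begin

locale pf =
  fixes \<theta> :: "'g::{finite,group_add} \<Rightarrow> real^'d^'d"
    and Rt :: "(nat \<times> ('g \<Rightarrow> nat \<Rightarrow> nat \<Rightarrow> real)) set"
    and Z :: "'g \<Rightarrow> ((nat \<times> ('g \<Rightarrow> nat \<Rightarrow> nat \<Rightarrow> real)) \<times> nat \<times> nat) \<Rightarrow> real"
    and kk :: nat and W :: "nat \<Rightarrow> (real^'d) set"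
  assumes pg: "point_group \<theta>"
    and irr: "irrep_reps Rt"
    and dm: "decomp_matrix Rt Z"
    and idc: "irred_decomp \<theta> kk W"
begin

abbreviation "B \<equiv> blockB Rt"

lemma Zrow: "(\<Sum>\<beta>\<in>B. Z \<alpha> \<beta> * Z \<alpha>' \<beta>) = (if \<alpha> = \<alpha>' then 1 else 0)"
  using dm unfolding decomp_matrix_def by blast

lemma Zcol: "\<beta> \<in> B \<Longrightarrow> \<beta>' \<in> B \<Longrightarrow> (\<Sum>\<alpha>\<in>UNIV. Z \<alpha> \<beta> * Z \<alpha> \<beta>') = (if \<beta> = \<beta>' then 1 else 0)"
  using dm unfolding decomp_matrix_def by blast

lemma Zrep0: "\<beta> \<in> B \<Longrightarrow> \<beta>' \<in> B \<Longrightarrow>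
   (\<Sum>\<alpha>\<in>UNIV. \<Sum>\<alpha>'\<in>UNIV. Z \<alpha> \<beta> * regR \<gamma> \<alpha> \<alpha>' * Z \<alpha>' \<beta>') = blockrep \<gamma> \<beta> \<beta>'"
  using dm unfolding decomp_matrix_def by blast

lemma Zrep: "\<beta> \<in> B \<Longrightarrow> \<beta>' \<in> B \<Longrightarrow>
   (\<Sum>\<alpha>\<in>UNIV. Z \<alpha> \<beta> * Z (\<alpha> + \<gamma>) \<beta>') = blockrep \<gamma> \<beta> \<beta>'"
proof -
  assume a: "\<beta> \<in> B" "\<beta>' \<in> B"
  have "(\<Sum>\<alpha>\<in>UNIV. \<Sum>\<alpha>'\<in>UNIV. Z \<alpha> \<beta> * regR \<gamma> \<alpha> \<alpha>' * Z \<alpha>' \<beta>')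
     = (\<Sum>\<alpha>\<in>UNIV. Z \<alpha> \<beta> * Z (\<alpha> + \<gamma>) \<beta>')"
  proof (rule sum.cong[OF refl])
    fix \<alpha>
    have "(\<Sum>\<alpha>'\<in>UNIV. Z \<alpha> \<beta> * regR \<gamma> \<alpha> \<alpha>' * Z \<alpha>' \<beta>')
       = (\<Sum>\<alpha>'\<in>UNIV. if \<alpha>' = \<alpha> + \<gamma> then Z \<alpha> \<beta> * Z \<alpha>' \<beta>' else 0)"
      by (rule sum.cong) (auto simp: regR_def)
    then show "(\<Sum>\<alpha>'\<in>UNIV. Z \<alpha> \<beta> * regR \<gamma> \<alpha> \<alpha>' * Z \<alpha>' \<beta>') = Z \<alpha> \<beta> * Z (\<alpha> + \<gamma>) \<beta>'"
      by simp
  qed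
  then show ?thesis using Zrep0[OF a] by simp
qed

lemma B_finite: "finite B"
proof (rule ccontr)
  assume "infinite B"
  then have "(\<Sum>\<beta>\<in>B. Z 0 \<beta> * Z 0 \<beta>) = 0" by simp
  with Zrow[of 0 0] show False by simp
qed

lemma Rt_props: assumes "(n, \<rho>) \<in> Rt" shows "is_orth_rep n \<rho> \<and> rep_irreducible n \<rho>"
proof -
  have "\<forall>x\<in>Rt. case x of (n, \<rho>) \<Rightarrow> is_orth_rep n \<rho> \<and> rep_irreducible n \<rho>"
    using irr unfolding irrep_reps_def by (rule conjunct1)
  from bspec[OF this assms] show ?thesis by simp
qed

lemma Rt_pos: "(n, \<rho>) \<in> Rt \<Longrightarrow> 0 < n"
  using Rt_props unfolding rep_irreducible_def by blast

lemma Rt_finite: "finite Rt"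
proof -
  have "Rt \<subseteq> fst ` B"
  proof
    fix r assume "r \<in> Rt"
    then have "(r, 0, 0) \<in> B" using Rt_pos[of "fst r" "snd r"] by (simp add: blockB_def)
    then show "r \<in> fst ` B" by force
  qed
  then show ?thesis using B_finite finite_subset by blast
qed

lemma inB: "(n, \<rho>) \<in> Rt \<Longrightarrow> a < n \<Longrightarrow> b < n \<Longrightarrow> ((n, \<rho>), a, b) \<in> B"
  by (simp add: blockB_def)

lemma rmult: "(n, \<rho>) \<in> Rt \<Longrightarrow> i < n \<Longrightarrow> j < n \<Longrightarrow> \<rho> (\<gamma> + \<delta>) i j = (\<Sum>l<n. \<rho> \<gamma> i l * \<rho> \<delta> l j)"
  using Rt_props unfolding is_orth_rep_def is_rep_def by blast

lemma rzero: "(n, \<rho>) \<in> Rt \<Longrightarrow> i < n \<Longrightarrow> j < n \<Longrightarrow> \<rho> 0 i j = (if i = j then 1 else 0)"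
  using Rt_props unfolding is_orth_rep_def is_rep_def by blast

lemma rorth: "(n, \<rho>) \<in> Rt \<Longrightarrow> i < n \<Longrightarrow> j < n \<Longrightarrow> (\<Sum>l<n. \<rho> \<gamma> l i * \<rho> \<gamma> l j) = (if i = j then 1 else 0)"
  using Rt_props unfolding is_orth_rep_def by blast

lemma rinv: assumes r: "(n, \<rho>) \<in> Rt" and ij: "i < n" "j < n"
  shows "\<rho> (- \<gamma>) i j = \<rho> \<gamma> j i"
proof -
  have "\<rho> (- \<gamma>) i j = (\<Sum>m<n. if i = m then \<rho> (- \<gamma>) m j else 0)"
    using ij by simp
  also have "\<dots> = (\<Sum>m<n. (\<Sum>l<n. \<rho> \<gamma> l i * \<rho> \<gamma> l m) * \<rho> (- \<gamma>) m j)"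
    by (rule sum.cong, simp, simp add: rorth[OF r] ij)
  also have "\<dots> = (\<Sum>l<n. \<rho> \<gamma> l i * (\<Sum>m<n. \<rho> \<gamma> l m * \<rho> (- \<gamma>) m j))"
    apply (simp add: sum_distrib_left sum_distrib_right mult_ac)
    by (rule sum.swap)
  also have "\<dots> = (\<Sum>l<n. \<rho> \<gamma> l i * \<rho> (\<gamma> + - \<gamma>) l j)"
  proof (rule sum.cong[OF refl])
    fix l assume "l \<in> {..<n}"
    then show "\<rho> \<gamma> l i * (\<Sum>m<n. \<rho> \<gamma> l m * \<rho> (- \<gamma>) m j) = \<rho> \<gamma> l i * \<rho> (\<gamma> + - \<gamma>) l j"
      using rmult[OF r, of l j \<gamma> "-\<gamma>"] ij by simp
  qed
  also have "\<dots> = (\<Sum>l<n. if l = j then \<rho> \<gamma> l i else 0)"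
    by (rule sum.cong, simp, simp add: rzero[OF r] ij)
  also have "\<dots> = \<rho> \<gamma> j i" using ij by simp
  finally show ?thesis .
qed

lemma rorth2: "(n, \<rho>) \<in> Rt \<Longrightarrow> i < n \<Longrightarrow> j < n \<Longrightarrow> (\<Sum>l<n. \<rho> \<gamma> i l * \<rho> \<gamma> j l) = (if i = j then 1 else 0)"
proof -
  assume r: "(n, \<rho>) \<in> Rt" and ij: "i < n" "j < n"
  have "(\<Sum>l<n. \<rho> \<gamma> i l * \<rho> \<gamma> j l) = (\<Sum>l<n. \<rho> \<gamma> i l * \<rho> (-\<gamma>) l j)"
    by (rule sum.cong, simp, simp add: rinv[OF r] ij)
  also have "\<dots> = \<rho> (\<gamma> + - \<gamma>) i j" using rmult[OF r ij, of \<gamma> "-\<gamma>"] by simp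
  finally show ?thesis using rzero[OF r ij] by simp
qed

lemma blockrep_eq: "blockrep \<gamma> ((r, a, b)) ((r', a', b')) = (if r = r' \<and> a = a' then snd r \<gamma> b b' else 0)"
  by (simp add: blockrep_def)

lemma Ztrans: assumes r: "(n, \<rho>) \<in> Rt" and ab: "a < n" "b < n"
  shows "Z (\<alpha> + \<gamma>) ((n, \<rho>), a, b) = (\<Sum>b'<n. Z \<alpha> ((n, \<rho>), a, b') * \<rho> \<gamma> b' b)"
proof -
  let ?b = "((n, \<rho>), a, b)"
  have "Z (\<alpha> + \<gamma>) ?b = (\<Sum>\<alpha>'\<in>UNIV. if \<alpha> = \<alpha>' then Z (\<alpha>' + \<gamma>) ?b else 0)"
    by simp
  also have "\<dots> = (\<Sum>\<alpha>'\<in>UNIV. (\<Sum>\<beta>\<in>B. Z \<alpha> \<beta> * Z \<alpha>' \<beta>) * Z (\<alpha>' + \<gamma>) ?b)"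
    by (rule sum.cong, simp, simp add: Zrow)
  also have "\<dots> = (\<Sum>\<beta>\<in>B. Z \<alpha> \<beta> * (\<Sum>\<alpha>'\<in>UNIV. Z \<alpha>' \<beta> * Z (\<alpha>' + \<gamma>) ?b))"
    apply (simp add: sum_distrib_left sum_distrib_right mult_ac)
    by (rule sum.swap)
  also have "\<dots> = (\<Sum>\<beta>\<in>B. Z \<alpha> \<beta> * blockrep \<gamma> \<beta> ?b)"
    by (rule sum.cong, simp, simp add: Zrep inB[OF r ab])
  also have "\<dots> = (\<Sum>\<beta>\<in>(\<lambda>b'. ((n, \<rho>), a, b')) ` {..<n}. Z \<alpha> \<beta> * blockrep \<gamma> \<beta> ?b)"
    apply (rule sum.mono_neutral_right[OF B_finite])
    using inB[OF r] ab apply auto[1]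
    by (auto simp: blockrep_def blockB_def image_iff)
  also have "\<dots> = (\<Sum>b'<n. Z \<alpha> ((n, \<rho>), a, b') * \<rho> \<gamma> b' b)"
    by (subst sum.reindex, auto simp: inj_on_def blockrep_eq)
  finally show ?thesis .
qed

lemma Z0: assumes r: "(n, \<rho>) \<in> Rt" and ab: "a < n" "b < n"
  shows "Z \<gamma> ((n, \<rho>), a, b) = (\<Sum>b'<n. Z 0 ((n, \<rho>), a, b') * \<rho> \<gamma> b' b)"
  using Ztrans[OF r ab, of 0 \<gamma>] by simp

end

lemma sum_uminus_reindex: "(\<Sum>\<gamma>\<in>UNIV. f (- \<gamma>)) = (\<Sum>\<gamma>\<in>(UNIV::'g::{finite,group_add} set). f \<gamma>)"
  by (rule sum.reindex_bij_witness[of _ uminus uminus]) auto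

lemma sum_rtrans_reindex: "(\<Sum>\<gamma>\<in>UNIV. f (\<gamma> + \<delta>)) = (\<Sum>\<gamma>\<in>(UNIV::'g::{finite,group_add} set). f \<gamma>)"
  by (rule sum.reindex_bij_witness[of _ "\<lambda>\<gamma>. \<gamma> + - \<delta>" "\<lambda>\<gamma>. \<gamma> + \<delta>"]) (auto simp: add.assoc)

lemma sum_ltrans_reindex: "(\<Sum>\<gamma>\<in>UNIV. f (\<delta> + \<gamma>)) = (\<Sum>\<gamma>\<in>(UNIV::'g::{finite,group_add} set). f \<gamma>)"
  by (rule sum.reindex_bij_witness[of _ "\<lambda>\<gamma>. - \<delta> + \<gamma>" "\<lambda>\<gamma>. \<delta> + \<gamma>"]) (auto simp: add.assoc[symmetric])

lemma sum3_swap: "(\<Sum>g\<in>A. \<Sum>m\<in>M. \<Sum>m'\<in>M'. f g m m') = (\<Sum>m\<in>M. \<Sum>m'\<in>M'. \<Sum>g\<in>A. f g m m')"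
  by (subst sum.swap, rule sum.cong, simp, rule sum.swap)

lemma orth_spans:
  fixes x y :: "'a::real_inner"
  assumes "x \<in> span A" "y \<in> span C" "\<And>a c. a \<in> A \<Longrightarrow> c \<in> C \<Longrightarrow> a \<bullet> c = 0"
  shows "x \<bullet> y = 0"
proof -
  have "orthogonal c x" if c: "c \<in> C" for c
    using orthogonal_to_span[OF assms(1), of c] assms(3)[OF _ c] by (simp add: orthogonal_def inner_commute)
  then have "orthogonal x y" using orthogonal_to_span[OF assms(2), of x] by (simp add: orthogonal_def inner_commute)
  then show ?thesis by (simp add: orthogonal_def)
qed

definition cf :: "('h::finite \<Rightarrow> nat \<Rightarrow> nat \<Rightarrow> real) \<Rightarrow> nat \<Rightarrow> nat \<Rightarrow> real^'h" where
  "cf \<rho> i j = (\<chi> \<gamma>. \<rho> \<gamma> i j)"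

definition bt :: "('h::finite \<Rightarrow> nat \<Rightarrow> nat \<Rightarrow> real) \<Rightarrow> real" where
  "bt \<rho> = (\<Sum>\<gamma>\<in>UNIV. \<rho> \<gamma> 0 0 * \<rho> \<gamma> 0 0)"

lemma cf_inner: "cf \<rho> i j \<bullet> cf \<sigma> i' j' = (\<Sum>\<gamma>\<in>UNIV. \<rho> \<gamma> i j * \<sigma> \<gamma> i' j')"
  by (simp add: cf_def inner_vec_def)

context pf
begin

definition zc where
  "zc \<beta> = (\<chi> \<gamma>. Z \<gamma> \<beta>)"

lemma zc_inner: "\<beta> \<in> B \<Longrightarrow> \<beta>' \<in> B \<Longrightarrow> zc \<beta> \<bullet> zc \<beta>' = (if \<beta> = \<beta>' then 1 else 0)"
  using Zcol by (simp add: zc_def inner_vec_def)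

lemma cf_in_span:
  assumes r: "(n, \<rho>) \<in> Rt" and kl: "k < n" "l < n"
  shows "cf \<rho> k l \<in> span ((\<lambda>a. zc ((n, \<rho>), a, l)) ` {..<n})"
proof -
  let ?S1 = "(\<lambda>a. zc ((n, \<rho>), a, l)) ` {..<n}"
  let ?S2 = "(\<lambda>k. cf \<rho> k l) ` {..<n}"
  have s12: "?S1 \<subseteq> span ?S2"
  proof
    fix x assume "x \<in> ?S1"
    then obtain a where a: "a < n" "x = zc ((n, \<rho>), a, l)" by auto
    have "x = (\<Sum>b'<n. Z 0 ((n, \<rho>), a, b') *\<^sub>R cf \<rho> b' l)"
      unfolding a(2) zc_def cf_def vec_eq_iff
      using Z0[OF r a(1) kl(2)] by (simp add: sum_component)
    also have "\<dots> \<in> span ?S2"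
      by (rule span_sum, rule span_mul, rule span_base) auto
    finally show "x \<in> span ?S2" .
  qed
  have inj: "inj_on (\<lambda>a. zc ((n, \<rho>), a, l)) {..<n}"
  proof (rule inj_onI)
    fix a a' assume "a \<in> {..<n}" "a' \<in> {..<n}" "zc ((n, \<rho>), a, l) = zc ((n, \<rho>), a', l)"
    then have "zc ((n, \<rho>), a, l) \<bullet> zc ((n, \<rho>), a', l) = 1"
      using zc_inner[OF inB[OF r, of a' l] inB[OF r, of a' l]] kl by auto
    then show "a = a'"
      using zc_inner[OF inB[OF r, of a l] inB[OF r, of a' l]] kl \<open>a \<in> _\<close> \<open>a' \<in> _\<close>
      by (auto split: if_splits)
  qed
  have po: "pairwise orthogonal ?S1"
    unfolding pairwise_def orthogonal_def
    using zc_inner inB[OF r] kl by fastforce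
  have n0: "0 \<notin> ?S1"
  proof
    assume "0 \<in> ?S1"
    then obtain a where "a < n" "zc ((n, \<rho>), a, l) = 0" by auto
    then show False using zc_inner[OF inB[OF r, of a l] inB[OF r, of a l]] kl by simp
  qed
  have ind: "independent ?S1" by (rule pairwise_orthogonal_independent[OF po n0])
  have d1: "dim ?S1 = n"
    using dim_span_eq_card_independent[OF ind] card_image[OF inj] by (simp add: dim_span)
  have d2: "dim (span ?S2) \<le> n"
    using dim_le_card[of ?S2 ?S2] card_image_le[of "{..<n}" "\<lambda>k. cf \<rho> k l"]
    by (simp add: dim_span span_superset)
  have "span ?S1 = span (span ?S2)"
    by (rule dim_eq_span[OF s12]) (use d1 d2 in simp)
  then show ?thesis using kl by (simp add: span_base)
qed

lemma R1:
  assumes r: "(n, \<rho>) \<in> Rt" and s: "(m, \<sigma>) \<in> Rt" and ne: "(n, \<rho>) \<noteq> (m, \<sigma>)"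
    and kl: "k < n" "l < n" and kl': "k' < m" "l' < m"
  shows "(\<Sum>\<gamma>\<in>UNIV. \<rho> \<gamma> k l * \<sigma> \<gamma> k' l') = 0"
proof -
  have "cf \<rho> k l \<bullet> cf \<sigma> k' l' = 0"
    apply (rule orth_spans[OF cf_in_span[OF r kl] cf_in_span[OF s kl']])
    using zc_inner inB[OF r] inB[OF s] ne kl kl' by auto
  then show ?thesis by (simp add: cf_inner)
qed

lemma R2a:
  assumes r: "(n, \<rho>) \<in> Rt" and kl: "k < n" "l < n" and kl': "k' < n" "l' < n" and ne: "l \<noteq> l'"
  shows "(\<Sum>\<gamma>\<in>UNIV. \<rho> \<gamma> k l * \<rho> \<gamma> k' l') = 0"
proof -
  have "cf \<rho> k l \<bullet> cf \<rho> k' l' = 0"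
    apply (rule orth_spans[OF cf_in_span[OF r kl] cf_in_span[OF r kl']])
    using zc_inner inB[OF r] ne kl kl' by auto
  then show ?thesis by (simp add: cf_inner)
qed

lemma Rsym:
  assumes r: "(n, \<rho>) \<in> Rt" and kl: "k < n" "l < n" and kl': "k' < n" "l' < n"
  shows "(\<Sum>\<gamma>\<in>UNIV. \<rho> \<gamma> k l * \<rho> \<gamma> k' l') = (\<Sum>\<gamma>\<in>UNIV. \<rho> \<gamma> l k * \<rho> \<gamma> l' k')"
proof -
  have "(\<Sum>\<gamma>\<in>UNIV. \<rho> \<gamma> k l * \<rho> \<gamma> k' l') = (\<Sum>\<gamma>\<in>UNIV. \<rho> (-\<gamma>) k l * \<rho> (-\<gamma>) k' l')"
    by (rule sum_uminus_reindex[symmetric])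
  also have "\<dots> = (\<Sum>\<gamma>\<in>UNIV. \<rho> \<gamma> l k * \<rho> \<gamma> l' k')"
    using rinv[OF r] kl kl' by simp
  finally show ?thesis .
qed


lemma Rdiag:
  assumes r: "(n, \<rho>) \<in> Rt" and i: "i < n" and kl: "l < n" "l' < n"
  shows "(\<Sum>\<gamma>\<in>UNIV. \<rho> \<gamma> i l * \<rho> \<gamma> i l') =
     (\<Sum>m<n. (\<Sum>\<gamma>\<in>UNIV. \<rho> \<gamma> i m * \<rho> \<gamma> i m) * \<rho> \<delta> m l * \<rho> \<delta> m l')"
proof -
  define P where "P = (\<lambda>m m'. (\<Sum>\<gamma>\<in>UNIV. \<rho> \<gamma> i m * \<rho> \<gamma> i m'))"
  have "(\<Sum>\<gamma>\<in>UNIV. \<rho> \<gamma> i l * \<rho> \<gamma> i l') = (\<Sum>\<gamma>\<in>UNIV. \<rho> (\<gamma> + \<delta>) i l * \<rho> (\<gamma> + \<delta>) i l')"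
    by (rule sum_rtrans_reindex[symmetric])
  also have "\<dots> = (\<Sum>\<gamma>\<in>UNIV. (\<Sum>m<n. \<rho> \<gamma> i m * \<rho> \<delta> m l) * (\<Sum>m'<n. \<rho> \<gamma> i m' * \<rho> \<delta> m' l'))"
    using rmult[OF r] i kl by simp
  also have "\<dots> = (\<Sum>\<gamma>\<in>UNIV. \<Sum>m<n. \<Sum>m'<n. (\<rho> \<gamma> i m * \<rho> \<delta> m l) * (\<rho> \<gamma> i m' * \<rho> \<delta> m' l'))"
    by (simp add: sum_product)
  also have "\<dots> = (\<Sum>m<n. \<Sum>m'<n. \<Sum>\<gamma>\<in>UNIV. (\<rho> \<gamma> i m * \<rho> \<delta> m l) * (\<rho> \<gamma> i m' * \<rho> \<delta> m' l'))"
    by (rule sum3_swap)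
  also have "\<dots> = (\<Sum>m<n. \<Sum>m'<n. P m m' * \<rho> \<delta> m l * \<rho> \<delta> m' l')"
    unfolding P_def by (intro sum.cong refl) (simp add: sum_distrib_left sum_distrib_right mult_ac)
  also have "\<dots> = (\<Sum>m<n. \<Sum>m'<n. if m = m' then P m m * \<rho> \<delta> m l * \<rho> \<delta> m l' else 0)"
    using R2a[OF r] i unfolding P_def by (intro sum.cong) auto
  also have "\<dots> = (\<Sum>m<n. P m m * \<rho> \<delta> m l * \<rho> \<delta> m l')"
    by simp
  finally show ?thesis unfolding P_def .
qed

lemma Rdiag2:
  assumes r: "(n, \<rho>) \<in> Rt" and i: "i < n" and kl: "l < n" "j < n"
  shows "(\<Sum>\<gamma>\<in>UNIV. \<rho> \<gamma> i l * \<rho> \<gamma> i l) * \<rho> \<delta> j l = (\<Sum>\<gamma>\<in>UNIV. \<rho> \<gamma> i j * \<rho> \<gamma> i j) * \<rho> \<delta> j l"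
proof -
  define P where "P = (\<lambda>m. (\<Sum>\<gamma>\<in>UNIV. \<rho> \<gamma> i m * \<rho> \<gamma> i m))"
  have "P l * \<rho> \<delta> j l = (\<Sum>l'<n. (if l = l' then P l else 0) * \<rho> \<delta> j l')"
    using kl by (simp add: if_distrib[of "\<lambda>x. x * _"] cong: if_cong)
  also have "\<dots> = (\<Sum>l'<n. (\<Sum>m<n. P m * \<rho> \<delta> m l * \<rho> \<delta> m l') * \<rho> \<delta> j l')"
  proof (rule sum.cong[OF refl])
    fix l' assume "l' \<in> {..<n}"
    then show "(if l = l' then P l else 0) * \<rho> \<delta> j l' = (\<Sum>m<n. P m * \<rho> \<delta> m l * \<rho> \<delta> m l') * \<rho> \<delta> j l'"
      using Rdiag[OF r i kl(1), of l' \<delta>] R2a[OF r i kl(1) i, of l'] unfolding P_def by auto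
  qed
  also have "\<dots> = (\<Sum>m<n. P m * \<rho> \<delta> m l * (\<Sum>l'<n. \<rho> \<delta> m l' * \<rho> \<delta> j l'))"
    apply (simp add: sum_distrib_left sum_distrib_right mult_ac)
    by (rule sum.swap)
  also have "\<dots> = (\<Sum>m<n. if m = j then P m * \<rho> \<delta> m l else 0)"
    using rorth2[OF r] kl by (intro sum.cong) auto
  also have "\<dots> = P j * \<rho> \<delta> j l" using kl by simp
  finally show ?thesis unfolding P_def .
qed

lemma Rconst_row:
  assumes r: "(n, \<rho>) \<in> Rt" and i: "i < n" and l: "l < n"
  shows "(\<Sum>\<gamma>\<in>UNIV. \<rho> \<gamma> i l * \<rho> \<gamma> i l) = (\<Sum>\<gamma>\<in>UNIV. \<rho> \<gamma> i 0 * \<rho> \<gamma> i 0)"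
proof -
  let ?P = "\<lambda>m. (\<Sum>\<gamma>\<in>UNIV. \<rho> \<gamma> i m * \<rho> \<gamma> i m)"
  have n0: "0 < n" using Rt_pos[OF r] .
  define S where "S = {x \<in> vecs n. \<forall>m. ?P m \<noteq> ?P 0 \<longrightarrow> x m = (0::real)}"
  have sub: "is_lsubspace n S"
    unfolding is_lsubspace_def S_def vecs_def by auto
  have inv: "\<forall>\<gamma>. \<forall>x\<in>S. mvec n (\<rho> \<gamma>) x \<in> S"
  proof (intro allI ballI)
    fix \<gamma> x assume x: "x \<in> S"
    have "mvec n (\<rho> \<gamma>) x m = 0" if m: "?P m \<noteq> ?P 0" for m
    proof (cases "m < n")
      case True
      have "\<rho> \<gamma> m j * x j = 0" if j: "j < n" for j
      proof (cases "x j = 0")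
        case False
        then have "?P j = ?P 0" using x unfolding S_def by auto
        moreover have "?P j * \<rho> \<gamma> m j = ?P m * \<rho> \<gamma> m j"
          using Rdiag2[OF r i j True] .
        ultimately have "(?P 0 - ?P m) * \<rho> \<gamma> m j = 0" by (simp add: algebra_simps)
        then show ?thesis using m by simp
      qed simp
      then show ?thesis by (auto simp: mvec_def intro!: sum.neutral)
    qed (simp add: mvec_def)
    then show "mvec n (\<rho> \<gamma>) x \<in> S"
      unfolding S_def vecs_def by (auto simp: mvec_def)
  qed
  have "S = {\<lambda>_. 0} \<or> S = vecs n"
    using Rt_props[OF r] sub inv unfolding rep_irreducible_def by blast
  moreover have "(\<lambda>j. if j = 0 then 1 else 0) \<in> S"
    unfolding S_def vecs_def using n0 by auto
  ultimately have Sv: "S = vecs n"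
    by (metis (mono_tags, lifting) singletonD zero_neq_one)
  have "(\<lambda>j. if j = l then 1 else 0) \<in> vecs n" using l by (simp add: vecs_def)
  then have "(\<lambda>j. if j = l then 1 else (0::real)) \<in> S" using Sv by simp
  then show ?thesis unfolding S_def by (auto split: if_splits)
qed

lemma Rconst:
  assumes r: "(n, \<rho>) \<in> Rt" and kl: "i < n" "l < n"
  shows "(\<Sum>\<gamma>\<in>UNIV. \<rho> \<gamma> i l * \<rho> \<gamma> i l) = bt \<rho>"
proof -
  have n0: "0 < n" using Rt_pos[OF r] .
  have "(\<Sum>\<gamma>\<in>UNIV. \<rho> \<gamma> i l * \<rho> \<gamma> i l) = (\<Sum>\<gamma>\<in>UNIV. \<rho> \<gamma> i 0 * \<rho> \<gamma> i 0)"
    by (rule Rconst_row[OF r kl])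
  also have "\<dots> = (\<Sum>\<gamma>\<in>UNIV. \<rho> \<gamma> 0 i * \<rho> \<gamma> 0 i)"
    by (rule Rsym[OF r kl(1) n0 kl(1) n0])
  also have "\<dots> = (\<Sum>\<gamma>\<in>UNIV. \<rho> \<gamma> 0 0 * \<rho> \<gamma> 0 0)"
    by (rule Rconst_row[OF r n0 kl(1)])
  finally show ?thesis by (simp add: bt_def)
qed

lemma bt_pos: assumes r: "(n, \<rho>) \<in> Rt" shows "bt \<rho> > 0"
proof -
  have n0: "0 < n" using Rt_pos[OF r] .
  have "1 \<le> \<rho> 0 0 0 * \<rho> 0 0 0" using rzero[OF r n0 n0] by simp
  also have "\<dots> \<le> bt \<rho>" unfolding bt_def
    by (rule member_le_sum) auto
  finally show ?thesis by simp
qed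

lemma ortho:
  assumes r: "(n, \<rho>) \<in> Rt" and s: "(m, \<sigma>) \<in> Rt"
    and kl: "i < n" "l < n" and kl': "i' < m" "l' < m"
  shows "(\<Sum>\<gamma>\<in>UNIV. \<rho> \<gamma> i l * \<sigma> \<gamma> i' l') =
    (if (n, \<rho>) = (m, \<sigma>) \<and> i = i' \<and> l = l' then bt \<rho> else 0)"
proof (cases "(n, \<rho>) = (m, \<sigma>)")
  case False
  then show ?thesis using R1[OF r s False kl kl'] by auto
next
  case True
  then have e: "m = n" "\<sigma> = \<rho>" by auto
  show ?thesis
  proof (cases "l = l'")
    case False
    then show ?thesis using R2a[OF r kl] kl' e by simp
  next
    case ll: True
    show ?thesis
    proof (cases "i = i'")
      case True
      then show ?thesis using Rconst[OF r kl] e ll by simp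
    next
      case False
      have "(\<Sum>\<gamma>\<in>UNIV. \<rho> \<gamma> i l * \<rho> \<gamma> i' l') = (\<Sum>\<gamma>\<in>UNIV. \<rho> \<gamma> l i * \<rho> \<gamma> l' i')"
        using Rsym[OF r kl] kl' e by simp
      also have "\<dots> = 0" using R2a[OF r kl(2) kl(1)] kl' e False by simp
      finally show ?thesis using False e by simp
    qed
  qed
qed

end

definition intw :: "('g \<Rightarrow> real^'d^'d) \<Rightarrow> nat \<Rightarrow> ('g \<Rightarrow> nat \<Rightarrow> nat \<Rightarrow> real) \<Rightarrow> (nat \<Rightarrow> real^'d) \<Rightarrow> bool" where
  "intw th n \<rho> F \<longleftrightarrow> (\<forall>\<gamma>. \<forall>b<n. th \<gamma> *v F b = (\<Sum>b'<n. \<rho> \<gamma> b' b *\<^sub>R F b'))"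

lemma orth_inner: "orthogonal_matrix (A::real^'n^'n) \<Longrightarrow> (A *v x) \<bullet> (A *v y) = x \<bullet> y"
  by (metis dot_lmul_matrix matrix_vector_mul_assoc matrix_vector_mul_lid orthogonal_matrix_def transpose_matrix_vector)

context pf
begin

lemma th_inner: "(\<theta> \<gamma> *v x) \<bullet> (\<theta> \<gamma> *v y) = x \<bullet> y"
  using pg orth_inner unfolding point_group_def by blast

lemma th_add: "\<theta> (\<gamma> + \<delta>) *v x = \<theta> \<gamma> *v (\<theta> \<delta> *v x)"
  using pg unfolding point_group_def by (simp add: matrix_vector_mul_assoc)

lemma th_zero_mat: "\<theta> 0 = mat 1"
  using pg unfolding point_group_def
  by (metis ab_left_minus add.inverse_neutral matrix_mul_assoc matrix_mul_lid orthogonal_matrix)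

lemma th_zero: "\<theta> 0 *v x = x"
  by (simp add: th_zero_mat)

lemma th_lin: "\<theta> \<gamma> *v (x + y) = \<theta> \<gamma> *v x + \<theta> \<gamma> *v y" "\<theta> \<gamma> *v (c *\<^sub>R x) = c *\<^sub>R (\<theta> \<gamma> *v x)"
  "\<theta> \<gamma> *v (sum f A) = (\<Sum>a\<in>A. \<theta> \<gamma> *v f a)" "\<theta> \<gamma> *v 0 = 0" "\<theta> \<gamma> *v (x - y) = \<theta> \<gamma> *v x - \<theta> \<gamma> *v y"
  using linear_add[OF matrix_vector_mul_linear, of "\<theta> \<gamma>"] linear_scale[OF matrix_vector_mul_linear, of "\<theta> \<gamma>"]
    linear_sum[OF matrix_vector_mul_linear, of "\<theta> \<gamma>"] linear_diff[OF matrix_vector_mul_linear, of "\<theta> \<gamma>"]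
  by auto

lemma avg:
  assumes r: "(n, \<rho>) \<in> Rt" and s: "(m, \<sigma>) \<in> Rt" and F: "intw \<theta> n \<rho> F" and G: "intw \<theta> m \<sigma> G"
    and b: "b < n" "b' < m"
  shows "of_nat CARD('g) * (F b \<bullet> G b') = (\<Sum>i<n. \<Sum>l<m. (F i \<bullet> G l) * (\<Sum>\<gamma>\<in>UNIV. \<rho> \<gamma> i b * \<sigma> \<gamma> l b'))"
proof -
  have e: "F b \<bullet> G b' = (\<Sum>i<n. \<Sum>l<m. \<rho> \<gamma> i b * \<sigma> \<gamma> l b' * (F i \<bullet> G l))" for \<gamma>
  proof -
    have "F b \<bullet> G b' = (\<theta> \<gamma> *v F b) \<bullet> (\<theta> \<gamma> *v G b')" by (simp add: th_inner)
    also have "\<dots> = (\<Sum>i<n. \<rho> \<gamma> i b *\<^sub>R F i) \<bullet> (\<Sum>l<m. \<sigma> \<gamma> l b' *\<^sub>R G l)"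
      using F G b unfolding intw_def by simp
    also have "\<dots> = (\<Sum>i<n. \<Sum>l<m. \<rho> \<gamma> i b * \<sigma> \<gamma> l b' * (F i \<bullet> G l))"
      unfolding inner_sum_left by (intro sum.cong refl) (simp add: inner_sum_right sum_distrib_left mult_ac)
    finally show ?thesis .
  qed
  have "of_nat CARD('g) * (F b \<bullet> G b') = (\<Sum>\<gamma>\<in>(UNIV::'g set). F b \<bullet> G b')" by simp
  also have "\<dots> = (\<Sum>\<gamma>\<in>UNIV. \<Sum>i<n. \<Sum>l<m. \<rho> \<gamma> i b * \<sigma> \<gamma> l b' * (F i \<bullet> G l))"
    using e by simp
  also have "\<dots> = (\<Sum>i<n. \<Sum>l<m. \<Sum>\<gamma>\<in>UNIV. \<rho> \<gamma> i b * \<sigma> \<gamma> l b' * (F i \<bullet> G l))"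
    by (rule sum3_swap)
  also have "\<dots> = (\<Sum>i<n. \<Sum>l<m. (F i \<bullet> G l) * (\<Sum>\<gamma>\<in>UNIV. \<rho> \<gamma> i b * \<sigma> \<gamma> l b'))"
    by (intro sum.cong refl) (simp add: sum_distrib_left sum_distrib_right mult_ac)
  finally show ?thesis .
qed

lemma intw_cross:
  assumes r: "(n, \<rho>) \<in> Rt" and s: "(m, \<sigma>) \<in> Rt" and ne: "(n, \<rho>) \<noteq> (m, \<sigma>)"
    and F: "intw \<theta> n \<rho> F" and G: "intw \<theta> m \<sigma> G" and b: "b < n" "b' < m"
  shows "F b \<bullet> G b' = 0"
proof -
  have "of_nat CARD('g) * (F b \<bullet> G b') = 0"
    unfolding avg[OF r s F G b] using ortho[OF r s] b ne by (auto intro!: sum.neutral)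
  then show ?thesis by simp
qed

lemma intw_inner:
  assumes r: "(n, \<rho>) \<in> Rt" and F: "intw \<theta> n \<rho> F" and G: "intw \<theta> n \<rho> G" and b: "b < n" "b' < n"
  shows "F b \<bullet> G b' = (if b = b' then F 0 \<bullet> G 0 else 0)"
proof -
  have n0: "0 < n" using Rt_pos[OF r] .
  have gen: "of_nat CARD('g) * (F c \<bullet> G c') = (if c = c' then bt \<rho> * (\<Sum>i<n. F i \<bullet> G i) else 0)"
    if c: "c < n" "c' < n" for c c'
  proof -
    have "of_nat CARD('g) * (F c \<bullet> G c') = (\<Sum>i<n. \<Sum>l<n. (F i \<bullet> G l) * (if i = l \<and> c = c' then bt \<rho> else 0))"
      unfolding avg[OF r r F G c] using ortho[OF r r] c by (intro sum.cong refl) auto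
    also have "\<dots> = (\<Sum>i<n. if c = c' then (F i \<bullet> G i) * bt \<rho> else 0)"
      by (intro sum.cong refl) (auto simp: if_distrib[of "\<lambda>x. _ * x"] cong: if_cong)
    also have "\<dots> = (if c = c' then bt \<rho> * (\<Sum>i<n. F i \<bullet> G i) else 0)"
      by (simp add: sum_distrib_left mult_ac)
    finally show ?thesis .
  qed
  have c0: "real CARD('g) \<noteq> 0" by simp
  show ?thesis
  proof (cases "b = b'")
    case True
    then have "real CARD('g) * (F b \<bullet> G b') = real CARD('g) * (F 0 \<bullet> G 0)"
      using gen[OF b] gen[OF n0 n0] by simp
    then show ?thesis using c0 True by simp
  next
    case False
    then show ?thesis using gen[OF b] c0 by simp
  qed
qed

end

context pf
begin

lemma W_props: "i < kk \<Longrightarrow> subspace (W i) \<and> W i \<noteq> {0} \<and> theta_invariant \<theta> (W i) \<and>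
        (\<forall>U. subspace U \<and> U \<subseteq> W i \<and> theta_invariant \<theta> U \<longrightarrow> U = {0} \<or> U = W i)"
  using idc unfolding irred_decomp_def by blast

lemma W_sub: "i < kk \<Longrightarrow> subspace (W i)"
  using W_props by blast

lemma W_inv: "i < kk \<Longrightarrow> x \<in> W i \<Longrightarrow> \<theta> \<gamma> *v x \<in> W i"
  using W_props unfolding theta_invariant_def by blast

lemma W_irr: assumes "i < kk" "subspace U" "U \<subseteq> W i" "theta_invariant \<theta> U" shows "U = {0} \<or> U = W i"
proof -
  note h = W_props[OF assms(1), THEN conjunct2, THEN conjunct2, THEN conjunct2]
  show ?thesis
    apply (rule mp[OF spec[OF h, of U]])
    using assms(2-4) by (intro conjI)
qed

definition dec :: "real^'d \<Rightarrow> nat \<Rightarrow> real^'d" where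
  "dec x = (THE w. (\<forall>i<kk. w i \<in> W i) \<and> (\<forall>i\<ge>kk. w i = 0) \<and> x = (\<Sum>i<kk. w i))"

lemma dec_ex1: "\<exists>!w. (\<forall>i<kk. w i \<in> W i) \<and> (\<forall>i\<ge>kk. w i = 0) \<and> x = (\<Sum>i<kk. w i)"
  using idc unfolding irred_decomp_def by (rule conjunct2[THEN spec])

lemma dec_prop: "(\<forall>i<kk. dec x i \<in> W i) \<and> (\<forall>i\<ge>kk. dec x i = 0) \<and> x = (\<Sum>i<kk. dec x i)"
  unfolding dec_def by (rule theI'[OF dec_ex1])

lemma dec_in: "i < kk \<Longrightarrow> dec x i \<in> W i"
  using dec_prop by blast

lemma dec_out: "kk \<le> i \<Longrightarrow> dec x i = 0"
  using dec_prop by blast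

lemma dec_sum: "x = (\<Sum>i<kk. dec x i)"
  using dec_prop by blast

lemma dec_unique: "(\<forall>i<kk. w i \<in> W i) \<Longrightarrow> (\<forall>i\<ge>kk. w i = 0) \<Longrightarrow> x = (\<Sum>i<kk. w i) \<Longrightarrow> dec x = w"
  unfolding dec_def by (rule the1_equality[OF dec_ex1]) blast

lemma dec_add: "dec (x + y) = (\<lambda>i. dec x i + dec y i)"
  apply (rule dec_unique)
  using dec_in W_sub subspace_add apply blast
  using dec_out apply simp
  using dec_sum[of x] dec_sum[of y] by (simp add: sum.distrib)

lemma dec_scale: "dec (c *\<^sub>R x) = (\<lambda>i. c *\<^sub>R dec x i)"
  apply (rule dec_unique)
  using dec_in W_sub subspace_scale apply blast
  using dec_out apply simp
  using dec_sum[of x] by (simp add: scaleR_sum_right[symmetric])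

lemma dec_zero: "dec 0 = (\<lambda>i. 0)"
  apply (rule dec_unique)
  using W_sub subspace_0 by auto

lemma dec_diff: "dec (x - y) = (\<lambda>i. dec x i - dec y i)"
  using dec_add[of x "(-1) *\<^sub>R y"] dec_scale[of "-1" y] by simp

lemma dec_setsum: "finite A \<Longrightarrow> dec (\<Sum>a\<in>A. f a) = (\<lambda>i. \<Sum>a\<in>A. dec (f a) i)"
  by (induction A rule: finite_induct) (auto simp: dec_zero dec_add)

lemma dec_th: "dec (\<theta> \<gamma> *v x) = (\<lambda>i. \<theta> \<gamma> *v dec x i)"
  apply (rule dec_unique)
  using dec_in W_inv apply blast
  using dec_out th_lin apply simp
  using dec_sum[of x] th_lin(3) by metis

lemma dec_W: "j < kk \<Longrightarrow> x \<in> W j \<Longrightarrow> dec x = (\<lambda>i. if i = j then x else 0)"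
  apply (rule dec_unique)
  using W_sub subspace_0 apply auto[1]
  apply simp
  by (simp add: if_distrib cong: if_cong)

lemma intw_add: "intw \<theta> n \<rho> F \<Longrightarrow> intw \<theta> n \<rho> G \<Longrightarrow> intw \<theta> n \<rho> (\<lambda>b. a *\<^sub>R F b + c *\<^sub>R G b)"
  unfolding intw_def by (simp add: th_lin scaleR_sum_right sum.distrib algebra_simps)

lemma intw_sum: "finite I \<Longrightarrow> (\<And>i. i \<in> I \<Longrightarrow> intw \<theta> n \<rho> (F i)) \<Longrightarrow> intw \<theta> n \<rho> (\<lambda>b. \<Sum>i\<in>I. c i *\<^sub>R F i b)"
proof (induction I rule: finite_induct)
  case empty
  then show ?case by (simp add: intw_def th_lin)
next
  case (insert x I)
  then have "intw \<theta> n \<rho> (\<lambda>b. c x *\<^sub>R F x b + 1 *\<^sub>R (\<Sum>i\<in>I. c i *\<^sub>R F i b))"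
    by (intro intw_add) auto
  then show ?case using insert by simp
qed

lemma intw_dec: assumes F: "intw \<theta> n \<rho> F" shows "intw \<theta> n \<rho> (\<lambda>b. dec (F b) i)"
  unfolding intw_def
proof (intro allI impI)
  fix \<gamma> b assume b: "b < n"
  have "\<theta> \<gamma> *v dec (F b) i = dec (\<theta> \<gamma> *v F b) i" by (simp add: dec_th)
  also have "\<dots> = dec (\<Sum>b'<n. \<rho> \<gamma> b' b *\<^sub>R F b') i" using F b unfolding intw_def by simp
  also have "\<dots> = (\<Sum>b'<n. \<rho> \<gamma> b' b *\<^sub>R dec (F b') i)" by (simp add: dec_setsum dec_scale)
  finally show "\<theta> \<gamma> *v dec (F b) i = (\<Sum>b'<n. \<rho> \<gamma> b' b *\<^sub>R dec (F b') i)" .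
qed

end

lemma kernel_inj_indep:
  fixes G :: "nat \<Rightarrow> 'a::real_vector"
  assumes K: "\<And>c. (\<Sum>b<n. c b *\<^sub>R G b) = 0 \<Longrightarrow> \<forall>b<n. c b = 0"
  shows "inj_on G {..<n}" "independent (G ` {..<n})"
proof -
  show inj: "inj_on G {..<n}"
  proof (rule inj_onI, rule ccontr)
    fix b b' assume b: "b \<in> {..<n}" "b' \<in> {..<n}" "G b = G b'" "b \<noteq> b'"
    let ?c = "\<lambda>j. if j = b then 1 else if j = b' then -1 else (0::real)"
    have "(\<Sum>j<n. ?c j *\<^sub>R G j) = (\<Sum>j<n. (if j = b then G b else 0) - (if j = b' then G b' else 0))"
      by (rule sum.cong) (use b in auto)
    also have "\<dots> = 0" using b by (simp add: sum_subtractf)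
    finally have "\<forall>j<n. ?c j = 0" by (rule K)
    then show False using b by auto
  qed
  show "independent (G ` {..<n})"
  proof
    assume "dependent (G ` {..<n})"
    then obtain u where u: "\<exists>v\<in>G ` {..<n}. u v \<noteq> 0" "(\<Sum>v\<in>G ` {..<n}. u v *\<^sub>R v) = 0"
      using dependent_finite[of "G ` {..<n}"] by auto
    have "(\<Sum>b<n. u (G b) *\<^sub>R G b) = 0" using u(2) sum.reindex[OF inj, of "\<lambda>v. u v *\<^sub>R v"] by simp
    then have "\<forall>b<n. u (G b) = 0" by (rule K)
    then show False using u(1) by auto
  qed
qed

context pf
begin

definition Tsel :: "nat \<Rightarrow> nat \<times> ('g \<Rightarrow> nat \<Rightarrow> nat \<Rightarrow> real) \<Rightarrow> nat \<Rightarrow> real^'d" where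
  "Tsel i r = (SOME T. inj_on T {..<fst r} \<and> independent (T ` {..<fst r}) \<and> span (T ` {..<fst r}) = W i \<and>
        (\<forall>\<gamma>. \<forall>b<fst r. \<theta> \<gamma> *v T b = (\<Sum>b'<fst r. snd r \<gamma> b' b *\<^sub>R T b')))"

definition Iset :: "nat \<times> ('g \<Rightarrow> nat \<Rightarrow> nat \<Rightarrow> real) \<Rightarrow> nat set" where
  "Iset r = {i. i < kk \<and> subrep_equiv \<theta> (W i) r}"

lemma Iset_finite: "finite (Iset r)"
  unfolding Iset_def by simp

lemma Iset_card: "card (Iset r) = rep_multiplicity \<theta> kk W r"
  unfolding Iset_def rep_multiplicity_def by simp

lemma Tsel:
  assumes "subrep_equiv \<theta> (W i) (n, \<rho>)"
  shows "inj_on (Tsel i (n, \<rho>)) {..<n} \<and> independent (Tsel i (n, \<rho>) ` {..<n}) \<and>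
         span (Tsel i (n, \<rho>) ` {..<n}) = W i \<and> intw \<theta> n \<rho> (Tsel i (n, \<rho>))"
proof -
  have ex: "\<exists>T. inj_on T {..<n} \<and> independent (T ` {..<n}) \<and> span (T ` {..<n}) = W i \<and>
        (\<forall>\<gamma>. \<forall>b<n. \<theta> \<gamma> *v T b = (\<Sum>b'<n. \<rho> \<gamma> b' b *\<^sub>R T b'))"
    using assms unfolding subrep_equiv_def by simp
  have eq: "Tsel i (n, \<rho>) = (SOME T. inj_on T {..<n} \<and> independent (T ` {..<n}) \<and> span (T ` {..<n}) = W i \<and>
        (\<forall>\<gamma>. \<forall>b<n. \<theta> \<gamma> *v T b = (\<Sum>b'<n. \<rho> \<gamma> b' b *\<^sub>R T b')))"
    unfolding Tsel_def by (simp only: fst_conv snd_conv)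
  show ?thesis using someI_ex[OF ex] unfolding eq intw_def by blast
qed

lemma Tsel0: assumes "subrep_equiv \<theta> (W i) (n, \<rho>)" "0 < n"
  shows "Tsel i (n, \<rho>) 0 \<noteq> 0"
proof
  assume "Tsel i (n, \<rho>) 0 = 0"
  then have "0 \<in> Tsel i (n, \<rho>) ` {..<n}" using assms(2) by force
  then have "dependent (Tsel i (n, \<rho>) ` {..<n})" by (rule dependent_zero)
  then show False using Tsel[OF assms(1)] by simp
qed

lemma schur1:
  assumes r: "(n, \<rho>) \<in> Rt" and i: "i < kk" and G: "intw \<theta> n \<rho> G" and GW: "\<forall>b<n. G b \<in> W i"
    and ne: "\<not> subrep_equiv \<theta> (W i) (n, \<rho>)"
  shows "\<forall>b<n. G b = 0"
proof -
  define K where "K = {x \<in> vecs n. (\<Sum>b<n. x b *\<^sub>R G b) = 0}"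
  have sc: "(\<Sum>b<n. (c * x b) *\<^sub>R G b) = c *\<^sub>R (\<Sum>b<n. x b *\<^sub>R G b)" for c x
    by (simp add: scaleR_sum_right)
  have sub: "is_lsubspace n K"
    unfolding is_lsubspace_def K_def vecs_def
    by (auto simp: scaleR_add_left sum.distrib sc)
  have inv: "\<forall>\<gamma>. \<forall>x\<in>K. mvec n (\<rho> \<gamma>) x \<in> K"
  proof (intro allI ballI)
    fix \<gamma> x assume x: "x \<in> K"
    have "(\<Sum>b<n. mvec n (\<rho> \<gamma>) x b *\<^sub>R G b) = (\<Sum>b<n. \<Sum>b'<n. (\<rho> \<gamma> b b' * x b') *\<^sub>R G b)"
      by (simp add: mvec_def scaleR_sum_left)
    also have "\<dots> = (\<Sum>b'<n. x b' *\<^sub>R (\<Sum>b<n. \<rho> \<gamma> b b' *\<^sub>R G b))"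
      by (subst sum.swap) (simp add: scaleR_sum_right mult.commute)
    also have "\<dots> = (\<Sum>b'<n. x b' *\<^sub>R (\<theta> \<gamma> *v G b'))"
      using G unfolding intw_def by simp
    also have "\<dots> = \<theta> \<gamma> *v (\<Sum>b'<n. x b' *\<^sub>R G b')"
      by (simp add: th_lin)
    also have "\<dots> = 0" using x unfolding K_def by (simp add: th_lin)
    finally show "mvec n (\<rho> \<gamma>) x \<in> K"
      unfolding K_def vecs_def by (simp add: mvec_def)
  qed
  have "K = {\<lambda>_. 0} \<or> K = vecs n"
    using Rt_props[OF r] sub inv unfolding rep_irreducible_def by blast
  then show ?thesis
  proof
    assume K0: "K = {\<lambda>_. 0}"
    have Kc: "\<forall>b<n. c b = 0" if c: "(\<Sum>b<n. c b *\<^sub>R G b) = 0" for c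
    proof -
      let ?x = "\<lambda>b. if b < n then c b else 0"
      have "(\<Sum>b<n. ?x b *\<^sub>R G b) = 0" using c by simp
      then have "?x \<in> K" unfolding K_def vecs_def by simp
      then have "?x = (\<lambda>_. 0)" using K0 by simp
      then show ?thesis by (metis (mono_tags, lifting))
    qed
    note ii = kernel_inj_indep[OF Kc]
    have n0: "0 < n" using Rt_pos[OF r] .
    have G0: "G 0 \<noteq> 0"
    proof
      assume "G 0 = 0"
      have "(\<Sum>b<n. (if b = 0 then 1 else 0) *\<^sub>R G b) = (\<Sum>b<n. if b = 0 then G b else 0)"
        by (rule sum.cong) auto
      also have "\<dots> = G 0" using n0 by simp
      finally have "(\<Sum>b<n. (if b = 0 then 1 else 0) *\<^sub>R G b) = 0" using \<open>G 0 = 0\<close> by simp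
      then show False using Kc[of "\<lambda>b. if b = 0 then 1 else 0"] n0 by auto
    qed
    let ?U = "span (G ` {..<n})"
    have UW: "?U \<subseteq> W i"
      using GW W_sub[OF i] by (metis image_subsetI lessThan_iff span_minimal)
    have Uinv: "theta_invariant \<theta> ?U"
      unfolding theta_invariant_def
    proof (intro allI)
      fix \<gamma>
      have "(\<lambda>x. \<theta> \<gamma> *v x) ` ?U = span ((\<lambda>x. \<theta> \<gamma> *v x) ` (G ` {..<n}))"
        by (rule span_linear_image[symmetric]) simp
      also have "\<dots> \<subseteq> ?U"
      proof (rule span_minimal)
        show "(\<lambda>x. \<theta> \<gamma> *v x) ` G ` {..<n} \<subseteq> ?U"
        proof
          fix y assume "y \<in> (\<lambda>x. \<theta> \<gamma> *v x) ` G ` {..<n}"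
          then obtain b where b: "b < n" "y = \<theta> \<gamma> *v G b" by auto
          then have "y = (\<Sum>b'<n. \<rho> \<gamma> b' b *\<^sub>R G b')" using G unfolding intw_def by simp
          also have "\<dots> \<in> ?U" by (intro span_sum span_mul span_base) auto
          finally show "y \<in> ?U" .
        qed
      qed simp
      finally show "(\<lambda>x. \<theta> \<gamma> *v x) ` ?U \<subseteq> ?U" .
    qed
    have "?U \<noteq> {0}" using G0 n0 span_base[of "G 0" "G ` {..<n}"] by auto
    then have "?U = W i" using W_irr[OF i _ UW Uinv] by auto
    then have "subrep_equiv \<theta> (W i) (n, \<rho>)"
      unfolding subrep_equiv_def using ii G unfolding intw_def by auto
    with ne show ?thesis by blast
  next
    assume "K = vecs n"
    show ?thesis
    proof (intro allI impI)
      fix b assume b: "b < n"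
      have "(\<lambda>j. if j = b then 1 else 0) \<in> vecs n" using b by (simp add: vecs_def)
      then have "(\<lambda>j. if j = b then 1 else (0::real)) \<in> K" using \<open>K = vecs n\<close> by simp
      then have "(\<Sum>j<n. (if j = b then 1 else 0) *\<^sub>R G j) = 0" unfolding K_def by simp
      moreover have "(\<Sum>j<n. (if j = b then 1 else 0) *\<^sub>R G j) = (\<Sum>j<n. if j = b then G j else 0)"
        by (rule sum.cong) auto
      ultimately show "G b = 0" using b by simp
    qed
  qed
qed

lemma intw_decomp:
  assumes r: "(n, \<rho>) \<in> Rt" and F: "intw \<theta> n \<rho> F"
  shows "\<exists>c. \<forall>b<n. F b = (\<Sum>i\<in>Iset (n, \<rho>). c i *\<^sub>R Tsel i (n, \<rho>) b)"
proof -
  have n0: "0 < n" using Rt_pos[OF r] .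
  define T where "T = (\<lambda>i. Tsel i (n, \<rho>))"
  define c where "c = (\<lambda>i. (dec (F 0) i \<bullet> T i 0) / (T i 0 \<bullet> T i 0))"
  have comp: "dec (F b) i = c i *\<^sub>R T i b" if i: "i \<in> Iset (n, \<rho>)" and b: "b < n" for i b
  proof -
    have ik: "i < kk" and sr: "subrep_equiv \<theta> (W i) (n, \<rho>)" using i unfolding Iset_def by auto
    have Ti: "inj_on (T i) {..<n} \<and> independent (T i ` {..<n}) \<and> span (T i ` {..<n}) = W i \<and> intw \<theta> n \<rho> (T i)"
      using Tsel[OF sr] unfolding T_def by simp
    have T0: "T i 0 \<noteq> 0" using Tsel0[OF sr n0] unfolding T_def .
    define H where "H = (\<lambda>b. 1 *\<^sub>R dec (F b) i + (- c i) *\<^sub>R T i b)"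
    have Hi: "intw \<theta> n \<rho> H" unfolding H_def
      using intw_add[OF intw_dec[OF F] Ti[THEN conjunct2, THEN conjunct2, THEN conjunct2], where a=1 and c="- c i"] by simp
    have H0: "H 0 \<bullet> T i 0 = 0"
    proof -
      have "T i 0 \<bullet> T i 0 \<noteq> 0" using T0 by simp
      then show ?thesis unfolding H_def c_def by (simp add: inner_diff_left)
    qed
    have HT: "H b \<bullet> T i b' = 0" if "b' < n" for b'
      using intw_inner[OF r Hi _ b that] Ti H0 by auto
    have HW: "H b \<in> W i"
      unfolding H_def using dec_in[OF ik] Ti W_sub[OF ik]
      by (metis lessThan_iff b image_eqI span_base subspace_add subspace_scale)
    have "orthogonal (H b) (H b)"
    proof (rule orthogonal_to_span)
      show "H b \<in> span (T i ` {..<n})" using HW Ti by simp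
      show "\<And>y. y \<in> T i ` {..<n} \<Longrightarrow> orthogonal (H b) y"
        using HT by (auto simp: orthogonal_def)
    qed
    then have "H b = 0" by (simp add: orthogonal_def)
    then show ?thesis unfolding H_def by (simp add: algebra_simps)
  qed
  have zero: "dec (F b) i = 0" if i: "i < kk" "i \<notin> Iset (n, \<rho>)" and b: "b < n" for i b
  proof -
    have "\<not> subrep_equiv \<theta> (W i) (n, \<rho>)" using i unfolding Iset_def by auto
    moreover have "\<forall>b<n. dec (F b) i \<in> W i" using dec_in[OF i(1)] by blast
    ultimately show ?thesis using schur1[OF r i(1) intw_dec[OF F]] b by blast
  qed
  show ?thesis
  proof (intro exI allI impI)
    fix b assume b: "b < n"
    have "F b = (\<Sum>i<kk. dec (F b) i)" by (rule dec_sum)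
    also have "\<dots> = (\<Sum>i\<in>Iset (n, \<rho>). dec (F b) i)"
      by (rule sum.mono_neutral_right) (auto simp: Iset_def zero b)
    also have "\<dots> = (\<Sum>i\<in>Iset (n, \<rho>). c i *\<^sub>R T i b)"
      by (rule sum.cong) (auto simp: comp b)
    finally show "F b = (\<Sum>i\<in>Iset (n, \<rho>). c i *\<^sub>R Tsel i (n, \<rho>) b)" unfolding T_def .
  qed
qed

end

lemma kernel_inj_indep_set:
  fixes y :: "'j \<Rightarrow> 'a::real_vector"
  assumes S: "finite S" and K: "\<And>c. (\<Sum>j\<in>S. c j *\<^sub>R y j) = 0 \<Longrightarrow> \<forall>j\<in>S. c j = 0"
  shows "inj_on y S" "independent (y ` S)"
proof -
  show inj: "inj_on y S"
  proof (rule inj_onI, rule ccontr)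
    fix b b' assume b: "b \<in> S" "b' \<in> S" "y b = y b'" "b \<noteq> b'"
    let ?c = "\<lambda>j. if j = b then 1 else if j = b' then -1 else (0::real)"
    have "(\<Sum>j\<in>S. ?c j *\<^sub>R y j) = (\<Sum>j\<in>S. (if j = b then y b else 0) - (if j = b' then y b' else 0))"
      by (rule sum.cong) (use b in auto)
    also have "\<dots> = 0" using b S by (simp add: sum_subtractf)
    finally have "\<forall>j\<in>S. ?c j = 0" by (rule K)
    then show False using b by auto
  qed
  show "independent (y ` S)"
  proof
    assume "dependent (y ` S)"
    then obtain u where u: "\<exists>v\<in>y ` S. u v \<noteq> 0" "(\<Sum>v\<in>y ` S. u v *\<^sub>R v) = 0"
      using dependent_finite[of "y ` S"] S by auto
    have "(\<Sum>b\<in>S. u (y b) *\<^sub>R y b) = 0" using u(2) sum.reindex[OF inj, of "\<lambda>v. u v *\<^sub>R v"] by simp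
    then have "\<forall>b\<in>S. u (y b) = 0" by (rule K)
    then show False using u(1) by auto
  qed
qed

lemma gram_rank:
  fixes y :: "'j \<Rightarrow> 'a::euclidean_space"
  assumes J: "finite J"
  shows "mat_rank J J (\<lambda>i j. y i \<bullet> y j) = dim (y ` J)"
proof -
  define SS where "SS = {card S | S. S \<subseteq> J \<and> finite S \<and>
     (\<forall>c. (\<forall>i\<in>J. (\<Sum>j\<in>S. c j * (y i \<bullet> y j)) = 0) \<longrightarrow> (\<forall>j\<in>S. c j = 0))}"
  have le: "m \<le> dim (y ` J)" if "m \<in> SS" for m
  proof -
    obtain S where S: "m = card S" "S \<subseteq> J" "finite S"
      "\<And>c. (\<forall>i\<in>J. (\<Sum>j\<in>S. c j * (y i \<bullet> y j)) = 0) \<Longrightarrow> (\<forall>j\<in>S. c j = 0)"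
      using \<open>m \<in> SS\<close> unfolding SS_def by blast
    have K: "\<forall>j\<in>S. c j = 0" if c: "(\<Sum>j\<in>S. c j *\<^sub>R y j) = 0" for c
    proof (rule S(4), intro ballI)
      fix i assume "i \<in> J"
      have "(\<Sum>j\<in>S. c j * (y i \<bullet> y j)) = y i \<bullet> (\<Sum>j\<in>S. c j *\<^sub>R y j)"
        by (simp add: inner_sum_right)
      then show "(\<Sum>j\<in>S. c j * (y i \<bullet> y j)) = 0" using c by simp
    qed
    note ii = kernel_inj_indep_set[where y=y, OF S(3) K]
    have "card (y ` S) \<le> dim (y ` J)"
      by (rule independent_card_le_dim) (use S(2) ii in auto)
    then show ?thesis using S(1) card_image[OF ii(1)] by simp
  qed
  obtain Bs where Bs: "Bs \<subseteq> y ` J" "independent Bs" "y ` J \<subseteq> span Bs" "card Bs = dim (y ` J)"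
    using basis_exists by blast
  define S where "S = inv_into J y ` Bs"
  have SJ: "S \<subseteq> J" unfolding S_def using Bs(1) by (auto intro: inv_into_into)
  have yS: "y ` S = Bs" unfolding S_def using Bs(1) by (auto simp: image_image f_inv_into_f[where f=y] subset_iff intro!: image_eqI)
  have injS: "inj_on y S" unfolding S_def using Bs(1) by (auto intro!: inj_onI simp: f_inv_into_f subset_iff)
  have finS: "finite S" using SJ J finite_subset by blast
  have "dim (y ` J) \<in> SS"
    unfolding SS_def
  proof (intro CollectI exI conjI allI impI)
    show "dim (y ` J) = card S" using Bs(4) yS card_image[OF injS] by simp
    show "S \<subseteq> J" by (rule SJ)
    show "finite S" by (rule finS)
    fix c assume c: "\<forall>i\<in>J. (\<Sum>j\<in>S. c j * (y i \<bullet> y j)) = 0"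
    define v where "v = (\<Sum>j\<in>S. c j *\<^sub>R y j)"
    have vo: "y i \<bullet> v = 0" if "i \<in> J" for i
      using c that unfolding v_def by (simp add: inner_sum_right)
    have vspan: "v \<in> span (y ` J)" unfolding v_def
      by (intro span_sum span_mul span_base) (use SJ in auto)
    have "orthogonal v v"
      by (rule orthogonal_to_span[OF vspan]) (use vo in \<open>auto simp: orthogonal_def inner_commute\<close>)
    then have v0: "v = 0" by (simp add: orthogonal_def)
    have "(\<Sum>b\<in>Bs. c (inv_into J y b) *\<^sub>R b) = v"
      unfolding v_def S_def
      apply (subst sum.reindex[OF inj_on_inv_into[OF Bs(1)]])
      apply (rule sum.cong[OF refl])
      using Bs(1) by (auto simp: f_inv_into_f subset_iff)
    then have "(\<Sum>b\<in>Bs. c (inv_into J y b) *\<^sub>R b) = 0" using v0 by simp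
    moreover have "finite Bs" using Bs(1) J finite_surj by blast
    ultimately have "\<forall>b\<in>Bs. c (inv_into J y b) = 0"
      using Bs(2) dependent_finite[of Bs] by auto
    then show "\<forall>j\<in>S. c j = 0" unfolding S_def by auto
  qed
  have fin: "finite SS"
  proof (rule finite_subset)
    show "SS \<subseteq> {..card J}" unfolding SS_def using J by (auto intro: card_mono)
  qed simp
  have "mat_rank J J (\<lambda>i j. y i \<bullet> y j) = Max SS"
    unfolding mat_rank_def SS_def by simp
  also have "\<dots> = dim (y ` J)"
    by (rule Max_eqI[OF fin]) (use le \<open>dim (y ` J) \<in> SS\<close> in auto)
  finally show ?thesis .
qed

definition Yv :: "('g::finite \<Rightarrow> 'b \<Rightarrow> real) \<Rightarrow> ('g \<times> 'v \<Rightarrow> real^'d) \<Rightarrow> 'b \<Rightarrow> 'v \<Rightarrow> real^'d" where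
  "Yv Z q \<beta> u = (\<Sum>\<alpha>\<in>UNIV. Z \<alpha> \<beta> *\<^sub>R q (\<alpha>, u))"

lemma Psi_gram: "Psi Z (gram q) (\<beta>1, u) (\<beta>2, w) = Yv Z q \<beta>1 u \<bullet> Yv Z q \<beta>2 w"
  unfolding Psi_def gram_def Yv_def inner_sum_left
  by (simp add: inner_sum_right sum_distrib_left mult_ac)

lemma Xblock_gram: "Xblock (Psi Z (gram q)) r = (\<lambda>i j. (case i of (b, u) \<Rightarrow> Yv Z q (r, 0, b) u) \<bullet> (case j of (b, u) \<Rightarrow> Yv Z q (r, 0, b) u))"
  unfolding Xblock_def by (auto simp: Psi_gram fun_eq_iff split: prod.splits)

lemma rank_gram_Y:
  "mat_rank ({..<n} \<times> UNIV) ({..<n} \<times> UNIV) (Xblock (Psi Z (gram (q :: 'g::finite \<times> 'v::finite \<Rightarrow> real^'d))) r)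
     = dim ((\<lambda>(b, u). Yv Z q (r, 0, b) u) ` ({..<n} \<times> UNIV))"
  unfolding Xblock_gram by (rule gram_rank) simp

context pf
begin

lemma compat_eq: "compatible \<theta> q \<Longrightarrow> q (\<alpha>, u) = \<theta> \<alpha> *v q (0, u)"
  unfolding compatible_def by (metis add.right_neutral)

definition Fy :: "('g \<Rightarrow> nat \<Rightarrow> nat \<Rightarrow> real) \<Rightarrow> nat \<Rightarrow> real^'d \<Rightarrow> nat \<Rightarrow> real^'d" where
  "Fy \<rho> b p = (\<lambda>b'. \<Sum>\<alpha>\<in>UNIV. \<rho> \<alpha> b' b *\<^sub>R (\<theta> \<alpha> *v p))"

lemma Fy_intw: assumes r: "(n, \<rho>) \<in> Rt" and b: "b < n" shows "intw \<theta> n \<rho> (Fy \<rho> b p)"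
  unfolding intw_def
proof (intro allI impI)
  fix \<delta> b' assume b': "b' < n"
  define g where "g = (\<lambda>\<alpha>. \<rho> (-\<delta> + \<alpha>) b' b *\<^sub>R (\<theta> \<alpha> *v p))"
  have "\<theta> \<delta> *v Fy \<rho> b p b' = (\<Sum>\<alpha>\<in>UNIV. \<rho> \<alpha> b' b *\<^sub>R (\<theta> (\<delta> + \<alpha>) *v p))"
    unfolding Fy_def by (simp add: th_lin th_add)
  also have "\<dots> = (\<Sum>\<alpha>\<in>UNIV. g (\<delta> + \<alpha>))"
    unfolding g_def by (simp add: add.assoc[symmetric])
  also have "\<dots> = (\<Sum>\<alpha>\<in>UNIV. g \<alpha>)" by (rule sum_ltrans_reindex)
  also have "\<dots> = (\<Sum>\<alpha>\<in>UNIV. \<Sum>b''<n. \<rho> \<delta> b'' b' *\<^sub>R (\<rho> \<alpha> b'' b *\<^sub>R (\<theta> \<alpha> *v p)))"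
    unfolding g_def
  proof (rule sum.cong[OF refl])
    fix \<alpha>
    have "\<rho> (-\<delta> + \<alpha>) b' b = (\<Sum>b''<n. \<rho> (-\<delta>) b' b'' * \<rho> \<alpha> b'' b)" by (rule rmult[OF r b' b])
    also have "\<dots> = (\<Sum>b''<n. \<rho> \<delta> b'' b' * \<rho> \<alpha> b'' b)"
      by (rule sum.cong) (auto simp: rinv[OF r b'])
    finally show "\<rho> (-\<delta> + \<alpha>) b' b *\<^sub>R (\<theta> \<alpha> *v p) = (\<Sum>b''<n. \<rho> \<delta> b'' b' *\<^sub>R (\<rho> \<alpha> b'' b *\<^sub>R (\<theta> \<alpha> *v p)))"
      by (simp add: scaleR_sum_left)
  qed
  also have "\<dots> = (\<Sum>b''<n. \<rho> \<delta> b'' b' *\<^sub>R Fy \<rho> b p b'')"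
    unfolding Fy_def by (subst sum.swap) (simp add: scaleR_sum_right)
  finally show "\<theta> \<delta> *v Fy \<rho> b p b' = (\<Sum>b''<n. \<rho> \<delta> b'' b' *\<^sub>R Fy \<rho> b p b'')" .
qed

lemma Y_eq:
  assumes q: "compatible \<theta> q" and r: "(n, \<rho>) \<in> Rt" and b: "b < n"
  shows "Yv Z q ((n, \<rho>), 0, b) u = (\<Sum>b'<n. Z 0 ((n, \<rho>), 0, b') *\<^sub>R Fy \<rho> b (q (0, u)) b')"
proof -
  have n0: "0 < n" using Rt_pos[OF r] .
  have "Yv Z q ((n, \<rho>), 0, b) u = (\<Sum>\<alpha>\<in>UNIV. (\<Sum>b'<n. Z 0 ((n, \<rho>), 0, b') * \<rho> \<alpha> b' b) *\<^sub>R (\<theta> \<alpha> *v q (0, u)))"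
    unfolding Yv_def
  proof (rule sum.cong[OF refl])
    fix \<alpha>
    show "Z \<alpha> ((n, \<rho>), 0, b) *\<^sub>R q (\<alpha>, u) = (\<Sum>b'<n. Z 0 ((n, \<rho>), 0, b') * \<rho> \<alpha> b' b) *\<^sub>R (\<theta> \<alpha> *v q (0, u))"
      using Z0[OF r n0 b, of \<alpha>] compat_eq[OF q, of \<alpha> u] by simp
  qed
  also have "\<dots> = (\<Sum>\<alpha>\<in>UNIV. \<Sum>b'<n. Z 0 ((n, \<rho>), 0, b') *\<^sub>R (\<rho> \<alpha> b' b *\<^sub>R (\<theta> \<alpha> *v q (0, u))))"
    by (simp add: scaleR_sum_left)
  also have "\<dots> = (\<Sum>b'<n. Z 0 ((n, \<rho>), 0, b') *\<^sub>R Fy \<rho> b (q (0, u)) b')"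
    unfolding Fy_def by (subst sum.swap) (simp add: scaleR_sum_right)
  finally show ?thesis .
qed

lemma Y_span:
  assumes q: "compatible \<theta> q" and r: "(n, \<rho>) \<in> Rt" and b: "b < n"
  shows "Yv Z q ((n, \<rho>), 0, b) u \<in> span ((\<lambda>i. \<Sum>b'<n. Z 0 ((n, \<rho>), 0, b') *\<^sub>R Tsel i (n, \<rho>) b') ` Iset (n, \<rho>))"
proof -
  obtain c where c: "\<forall>b'<n. Fy \<rho> b (q (0, u)) b' = (\<Sum>i\<in>Iset (n, \<rho>). c i *\<^sub>R Tsel i (n, \<rho>) b')"
    using intw_decomp[OF r Fy_intw[OF r b]] by blast
  have "Yv Z q ((n, \<rho>), 0, b) u = (\<Sum>b'<n. Z 0 ((n, \<rho>), 0, b') *\<^sub>R (\<Sum>i\<in>Iset (n, \<rho>). c i *\<^sub>R Tsel i (n, \<rho>) b'))"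
    unfolding Y_eq[OF q r b] using c by simp
  also have "\<dots> = (\<Sum>i\<in>Iset (n, \<rho>). c i *\<^sub>R (\<Sum>b'<n. Z 0 ((n, \<rho>), 0, b') *\<^sub>R Tsel i (n, \<rho>) b'))"
    by (simp add: scaleR_sum_right sum.swap[of _ "Iset _"] mult.commute)
  also have "\<dots> \<in> span ((\<lambda>i. \<Sum>b'<n. Z 0 ((n, \<rho>), 0, b') *\<^sub>R Tsel i (n, \<rho>) b') ` Iset (n, \<rho>))"
    by (intro span_sum span_mul span_base) auto
  finally show ?thesis .
qed

lemma rank_le:
  assumes q: "compatible \<theta> (q :: 'g \<times> 'v::finite \<Rightarrow> real^'d)" and r: "r \<in> Rt"
  shows "mat_rank ({..<fst r} \<times> UNIV) ({..<fst r} \<times> UNIV) (Xblock (Psi Z (gram q)) r) \<le> rep_multiplicity \<theta> kk W r"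
proof -
  obtain n \<rho> where r': "r = (n, \<rho>)" by (cases r)
  let ?A = "(\<lambda>i. \<Sum>b'<n. Z 0 ((n, \<rho>), 0, b') *\<^sub>R Tsel i (n, \<rho>) b') ` Iset (n, \<rho>)"
  have sub: "(\<lambda>(b, u). Yv Z q ((n, \<rho>), 0, b) u) ` ({..<n} \<times> UNIV) \<subseteq> span ?A"
    using Y_span[OF q r[unfolded r']] by auto
  have "mat_rank ({..<fst r} \<times> UNIV) ({..<fst r} \<times> UNIV) (Xblock (Psi Z (gram q)) r)
      = dim ((\<lambda>(b, u). Yv Z q ((n, \<rho>), 0, b) u) ` ({..<n} \<times> UNIV))"
    unfolding r' fst_conv by (rule rank_gram_Y)
  also have "\<dots> \<le> card ?A" by (rule dim_le_card[OF sub]) (simp add: Iset_finite)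
  also have "\<dots> \<le> card (Iset (n, \<rho>))" by (rule card_image_le[OF Iset_finite])
  also have "\<dots> = rep_multiplicity \<theta> kk W r" unfolding r' by (rule Iset_card)
  finally show ?thesis .
qed

lemma gram_Lap:
  assumes q: "q \<in> Ctheta \<theta>"
  shows "gram q \<in> LapGamma"
proof -
  have c: "compatible \<theta> q" and s: "(\<Sum>i\<in>UNIV. q i) = 0" using q unfolding Ctheta_def by auto
  have psd: "0 \<le> (\<Sum>i\<in>UNIV. \<Sum>j\<in>UNIV. x i * gram q i j * x j)" for x
  proof -
    have "(\<Sum>i\<in>UNIV. \<Sum>j\<in>UNIV. x i * gram q i j * x j) = (\<Sum>i\<in>UNIV. x i *\<^sub>R q i) \<bullet> (\<Sum>j\<in>UNIV. x j *\<^sub>R q j)"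
      unfolding gram_def inner_sum_left by (simp add: inner_sum_right sum_distrib_left mult_ac)
    then show ?thesis by simp
  qed
  have rs: "(\<Sum>j\<in>UNIV. gram q i j) = 0" for i
    unfolding gram_def using s by (simp add: inner_sum_right[symmetric])
  have inv: "gram q (\<alpha>, u) (\<beta>, v) = gram q (\<gamma> + \<alpha>, u) (\<gamma> + \<beta>, v)" for \<alpha> \<beta> \<gamma> u v
    unfolding gram_def using c unfolding compatible_def by (metis th_inner)
  show ?thesis unfolding LapGamma_def
    using psd rs inv by (auto simp: gram_def inner_commute)
qed

end

definition qf :: "'i set \<Rightarrow> ('i \<Rightarrow> 'i \<Rightarrow> real) \<Rightarrow> ('i \<Rightarrow> real) \<Rightarrow> real" where
  "qf I X x = (\<Sum>i\<in>I. \<Sum>j\<in>I. x i * X i j * x j)"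

lemma qf_insert:
  assumes I: "finite I" "a \<notin> I" and sym: "\<forall>i\<in>insert a I. \<forall>j\<in>insert a I. X i j = X j i"
  shows "qf (insert a I) X x = x a * X a a * x a + 2 * x a * (\<Sum>j\<in>I. X a j * x j) + qf I X x"
proof -
  have "qf (insert a I) X x = (\<Sum>j\<in>insert a I. x a * X a j * x j) + (\<Sum>i\<in>I. \<Sum>j\<in>insert a I. x i * X i j * x j)"
    unfolding qf_def by (rule sum.insert[OF I])
  also have "\<dots> = x a * X a a * x a + (\<Sum>j\<in>I. x a * X a j * x j) + (\<Sum>i\<in>I. x i * X i a * x a + (\<Sum>j\<in>I. x i * X i j * x j))"
    by (simp only: sum.insert[OF I])
  also have "(\<Sum>i\<in>I. x i * X i a * x a + (\<Sum>j\<in>I. x i * X i j * x j)) = (\<Sum>i\<in>I. x a * X a i * x i) + qf I X x"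
  proof -
    have Xs: "X i a = X a i" if "i \<in> I" for i using sym that by (metis insertI1 insertI2)
    have "(\<Sum>i\<in>I. x i * X i a * x a) = (\<Sum>i\<in>I. x a * X a i * x i)"
      by (rule sum.cong[OF refl]) (simp add: Xs)
    then show ?thesis unfolding qf_def sum.distrib by simp
  qed
  finally show ?thesis by (simp add: sum_distrib_left algebra_simps)
qed

lemma qf_restrict:
  assumes I: "finite I" "a \<notin> I" and sym: "\<forall>i\<in>insert a I. \<forall>j\<in>insert a I. X i j = X j i"
    and psd: "\<forall>x. 0 \<le> qf (insert a I) X x"
  shows "\<forall>x. 0 \<le> qf I X x"
proof
  fix x
  have "qf (insert a I) X (x(a := 0)) = qf I X (x(a := 0))" using qf_insert[OF I sym] by simp
  also have "\<dots> = qf I X x" unfolding qf_def using I by (intro sum.cong) auto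
  finally show "0 \<le> qf I X x" using psd by metis
qed

lemma psd_factor:
  assumes "finite I"
  shows "(\<forall>i\<in>I. \<forall>j\<in>I. X i j = X j i) \<Longrightarrow> (\<forall>x. 0 \<le> qf I X x) \<Longrightarrow>
    \<exists>v. \<forall>i\<in>I. \<forall>j\<in>I. X i j = (\<Sum>k\<in>I. v k i * v k j)"
  using assms
proof (induction I arbitrary: X rule: finite_induct)
  case empty
  then show ?case by simp
next
  case (insert a I)
  note I = insert.hyps(1,2)
  note sym = insert.prems(1)
  note psd = insert.prems(2)
  have Xsym: "X i j = X j i" if "i \<in> insert a I" "j \<in> insert a I" for i j
    using sym that by metis
  have qi: "qf (insert a I) X x = x a * X a a * x a + 2 * x a * (\<Sum>j\<in>I. X a j * x j) + qf I X x" for x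
    by (rule qf_insert[OF I sym])
  have Xaa: "0 \<le> X a a"
  proof -
    have "0 \<le> qf (insert a I) X (\<lambda>i. if i = a then 1 else 0)" using psd by blast
    also have "\<dots> = X a a"
    proof -
      have z1: "(\<Sum>j\<in>I. X a j * (if j = a then 1 else 0)) = 0" using I by (intro sum.neutral) auto
      have z2: "qf I X (\<lambda>i. if i = a then 1 else 0) = 0" unfolding qf_def using I by (intro sum.neutral) auto
      show ?thesis unfolding qi z1 z2 by simp
    qed
    finally show ?thesis .
  qed
  show ?case
  proof (cases "X a a = 0")
    case True
    have Xaj: "X a j = 0" if j: "j \<in> I" for j
    proof (rule ccontr)
      assume ne: "X a j \<noteq> 0"
      define t where "t = - (X j j + 1) / (2 * X a j)"
      let ?x = "\<lambda>i. if i = a then t else if i = j then 1 else (0::real)"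
      have "(\<Sum>j'\<in>I. X a j' * ?x j') = (\<Sum>j'\<in>I. if j' = j then X a j else 0)"
        by (rule sum.cong) (use I in auto)
      then have e1: "(\<Sum>j'\<in>I. X a j' * ?x j') = X a j" using j I by simp
      have inner: "(\<Sum>j'\<in>I. ?x i * X i j' * ?x j') = (if i = j then X j j else 0)" if i: "i \<in> I" for i
      proof -
        have "(\<Sum>j'\<in>I. ?x i * X i j' * ?x j') = (\<Sum>j'\<in>I. if j' = j then ?x i * X i j else 0)"
          by (rule sum.cong) (use I in auto)
        then show ?thesis using j I i by auto
      qed
      have "qf I X ?x = (\<Sum>i\<in>I. if i = j then X j j else 0)"
        unfolding qf_def by (rule sum.cong[OF refl]) (rule inner)
      then have e2: "qf I X ?x = X j j" using j I by simp
      have "qf (insert a I) X ?x = 2 * t * X a j + X j j"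
        unfolding qi using True e1 e2 by simp
      also have "\<dots> = -1" unfolding t_def using ne by (simp add: field_simps)
      finally show False using psd by (metis neg_0_le_iff_le not_one_le_zero)
    qed
    obtain v where v: "\<forall>i\<in>I. \<forall>j\<in>I. X i j = (\<Sum>k\<in>I. v k i * v k j)"
      using insert.IH[of X] sym qf_restrict[OF I sym psd] by auto
    define v' where "v' = (\<lambda>k i. if k = a \<or> i = a then 0 else v k i)"
    show ?thesis
    proof (intro exI ballI)
      fix i j assume ij: "i \<in> insert a I" "j \<in> insert a I"
      show "X i j = (\<Sum>k\<in>insert a I. v' k i * v' k j)"
      proof (cases "i = a \<or> j = a")
        case True
        then have "X i j = 0" using Xaj Xsym[OF ij] ij \<open>X a a = 0\<close> by auto
        then show ?thesis using True unfolding v'_def by (auto intro!: sum.neutral)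
      next
        case False
        then have "i \<in> I" "j \<in> I" using ij by auto
        then show ?thesis using v False I unfolding v'_def by (auto intro!: sum.cong)
      qed
    qed
  next
    case False
    then have pos: "X a a > 0" using Xaa by simp
    define w where "w = (\<lambda>i. X a i / sqrt (X a a))"
    define X' where "X' = (\<lambda>i j. X i j - w i * w j)"
    have sym': "\<forall>i\<in>I. \<forall>j\<in>I. X' i j = X' j i" unfolding X'_def using Xsym by (simp add: mult.commute)
    have psd': "\<forall>x. 0 \<le> qf I X' x"
    proof
      fix x
      define s where "s = (\<Sum>j\<in>I. X a j * x j)"
      have e1: "qf I X' x = qf I X x - s * s / X a a"
      proof -
        have "qf I X' x = qf I X x - (\<Sum>i\<in>I. \<Sum>j\<in>I. x i * (w i * w j) * x j)"
          unfolding qf_def X'_def by (simp add: algebra_simps sum_subtractf)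
        also have "(\<Sum>i\<in>I. \<Sum>j\<in>I. x i * (w i * w j) * x j) = (\<Sum>i\<in>I. w i * x i) * (\<Sum>j\<in>I. w j * x j)"
          by (simp add: sum_product mult_ac)
        also have "(\<Sum>i\<in>I. w i * x i) = s / sqrt (X a a)"
          unfolding w_def s_def by (simp add: sum_divide_distrib)
        finally show ?thesis using pos by (simp add: field_simps)
      qed
      define t where "t = - s / X a a"
      have "0 \<le> qf (insert a I) X (x(a := t))" using psd by blast
      also have "qf (insert a I) X (x(a := t)) = t * X a a * t + 2 * t * s + qf I X x"
      proof -
        have "(\<Sum>j\<in>I. X a j * (x(a := t)) j) = s" unfolding s_def using I by (intro sum.cong) auto
        moreover have "qf I X (x(a := t)) = qf I X x" unfolding qf_def using I by (intro sum.cong) auto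
        ultimately show ?thesis unfolding qi by simp
      qed
      also have "\<dots> = qf I X x - s * s / X a a" unfolding t_def using pos by (simp add: field_simps)
      finally show "0 \<le> qf I X' x" using e1 by simp
    qed
    obtain v where v: "\<forall>i\<in>I. \<forall>j\<in>I. X' i j = (\<Sum>k\<in>I. v k i * v k j)"
      using insert.IH[of X'] sym' psd' by auto
    define v' where "v' = (\<lambda>k i. if k = a then w i else if i = a then 0 else v k i)"
    have wa: "w a * w j = X a j" for j unfolding w_def using pos
      by (simp add: field_simps real_sqrt_mult[symmetric])
    have rest: "(\<Sum>k\<in>I. v' k i * v' k j) = (if i = a \<or> j = a then 0 else X' i j)" if "i \<in> insert a I" "j \<in> insert a I" for i j
    proof (cases "i = a \<or> j = a")
      case True
      then show ?thesis using I unfolding v'_def by (auto intro!: sum.neutral)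
    next
      case False
      then have "i \<in> I" "j \<in> I" using that by auto
      then show ?thesis using v False I unfolding v'_def by (auto intro!: sum.cong)
    qed
    show ?thesis
    proof (intro exI ballI)
      fix i j assume ij: "i \<in> insert a I" "j \<in> insert a I"
      have "(\<Sum>k\<in>insert a I. v' k i * v' k j) = w i * w j + (if i = a \<or> j = a then 0 else X' i j)"
        using I rest[OF ij] unfolding v'_def by simp
      also have "\<dots> = X i j"
      proof (cases "i = a \<or> j = a")
        case True
        then show ?thesis using wa[of j] wa[of i] Xsym[OF ij] ij by (auto simp: mult.commute)
      next
        case False
        then show ?thesis unfolding X'_def by simp
      qed
      finally show "X i j = (\<Sum>k\<in>insert a I. v' k i * v' k j)" by simp
    qed
  qed
qed

lemma Lap_factor:
  assumes L: "L \<in> LapGamma"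
  shows "\<exists>y :: ('g::{finite,group_add} \<times> 'v::finite) \<Rightarrow> real^('g \<times> 'v). L = gram y"
proof -
  have sym: "\<forall>i\<in>UNIV. \<forall>j\<in>UNIV. L i j = L j i" and psd: "\<forall>x. 0 \<le> qf UNIV L x"
    using L unfolding LapGamma_def qf_def by auto
  have fin: "finite (UNIV :: ('g \<times> 'v) set)" by simp
  from psd_factor[OF fin sym psd] obtain v where v: "\<forall>i\<in>UNIV. \<forall>j\<in>UNIV. L i j = (\<Sum>k\<in>(UNIV :: ('g \<times> 'v) set). v k i * v k j)"
    by blast
  define y where "y = (\<lambda>i. \<chi> k. v k i)"
  have "L = gram y"
    unfolding gram_def y_def using v by (auto simp: fun_eq_iff inner_vec_def)
  then show ?thesis by blast
qed

context pf
begin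

definition linv :: "('g \<times> 'v \<Rightarrow> 'g \<times> 'v \<Rightarrow> real) \<Rightarrow> bool" where
  "linv K \<longleftrightarrow> (\<forall>\<alpha> \<beta> \<gamma> u v. K (\<alpha>, u) (\<beta>, v) = K (\<gamma> + \<alpha>, u) (\<gamma> + \<beta>, v))"

lemma linv_Lap: "L \<in> LapGamma \<Longrightarrow> linv L"
  unfolding LapGamma_def linv_def by blast

lemma linv_shift: "linv K \<Longrightarrow> K (\<alpha>, u) (\<alpha> + \<gamma>, w) = K (0, u) (\<gamma>, w)"
  unfolding linv_def by (metis add.assoc add.left_inverse add.right_neutral)

lemma Psi_inv:
  assumes K: "linv K" and b: "\<beta> \<in> B" "\<beta>' \<in> B"
  shows "Psi Z K (\<beta>, u) (\<beta>', w) = (\<Sum>\<gamma>\<in>UNIV. blockrep \<gamma> \<beta> \<beta>' * K (0, u) (\<gamma>, w))"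
proof -
  have "Psi Z K (\<beta>, u) (\<beta>', w) = (\<Sum>\<alpha>1\<in>UNIV. \<Sum>\<alpha>2\<in>UNIV. Z \<alpha>1 \<beta> * K (\<alpha>1, u) (\<alpha>2, w) * Z \<alpha>2 \<beta>')"
    unfolding Psi_def by simp
  also have "\<dots> = (\<Sum>\<alpha>1\<in>UNIV. \<Sum>\<gamma>\<in>UNIV. Z \<alpha>1 \<beta> * K (\<alpha>1, u) (\<alpha>1 + \<gamma>, w) * Z (\<alpha>1 + \<gamma>) \<beta>')"
    by (rule sum.cong[OF refl]) (rule sum_ltrans_reindex[symmetric])
  also have "\<dots> = (\<Sum>\<alpha>1\<in>UNIV. \<Sum>\<gamma>\<in>UNIV. K (0, u) (\<gamma>, w) * (Z \<alpha>1 \<beta> * Z (\<alpha>1 + \<gamma>) \<beta>'))"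
    using linv_shift[OF K] by (simp add: mult_ac)
  also have "\<dots> = (\<Sum>\<gamma>\<in>UNIV. K (0, u) (\<gamma>, w) * (\<Sum>\<alpha>1\<in>UNIV. Z \<alpha>1 \<beta> * Z (\<alpha>1 + \<gamma>) \<beta>'))"
    by (subst sum.swap) (simp add: sum_distrib_left)
  also have "\<dots> = (\<Sum>\<gamma>\<in>UNIV. blockrep \<gamma> \<beta> \<beta>' * K (0, u) (\<gamma>, w))"
    using Zrep[OF b] by (simp add: mult.commute)
  finally show ?thesis .
qed

lemma Psi_invert:
  "K (\<alpha>1, u) (\<alpha>2, w) = (\<Sum>\<beta>1\<in>B. \<Sum>\<beta>2\<in>B. Z \<alpha>1 \<beta>1 * Z \<alpha>2 \<beta>2 * Psi Z K (\<beta>1, u) (\<beta>2, w))"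
proof -
  have "(\<Sum>\<beta>1\<in>B. \<Sum>\<beta>2\<in>B. Z \<alpha>1 \<beta>1 * Z \<alpha>2 \<beta>2 * Psi Z K (\<beta>1, u) (\<beta>2, w))
     = (\<Sum>\<beta>1\<in>B. \<Sum>\<beta>2\<in>B. \<Sum>a1\<in>UNIV. \<Sum>a2\<in>UNIV. (Z \<alpha>1 \<beta>1 * Z a1 \<beta>1) * (Z \<alpha>2 \<beta>2 * Z a2 \<beta>2) * K (a1, u) (a2, w))"
    unfolding Psi_def by (simp add: sum_distrib_left mult_ac)
  also have "\<dots> = (\<Sum>\<beta>1\<in>B. \<Sum>a1\<in>UNIV. \<Sum>\<beta>2\<in>B. \<Sum>a2\<in>UNIV. (Z \<alpha>1 \<beta>1 * Z a1 \<beta>1) * (Z \<alpha>2 \<beta>2 * Z a2 \<beta>2) * K (a1, u) (a2, w))"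
    by (intro sum.cong refl) (rule sum.swap)
  also have "\<dots> = (\<Sum>a1\<in>UNIV. \<Sum>\<beta>1\<in>B. \<Sum>a2\<in>UNIV. \<Sum>\<beta>2\<in>B. (Z \<alpha>1 \<beta>1 * Z a1 \<beta>1) * (Z \<alpha>2 \<beta>2 * Z a2 \<beta>2) * K (a1, u) (a2, w))"
    by (subst sum.swap) (intro sum.cong refl, rule sum.swap)
  also have "\<dots> = (\<Sum>a1\<in>UNIV. \<Sum>a2\<in>UNIV. \<Sum>\<beta>1\<in>B. \<Sum>\<beta>2\<in>B. (Z \<alpha>1 \<beta>1 * Z a1 \<beta>1) * (Z \<alpha>2 \<beta>2 * Z a2 \<beta>2) * K (a1, u) (a2, w))"
    by (intro sum.cong refl) (rule sum.swap)
  also have "\<dots> = (\<Sum>a1\<in>UNIV. \<Sum>a2\<in>UNIV. (\<Sum>\<beta>1\<in>B. Z \<alpha>1 \<beta>1 * Z a1 \<beta>1) * (\<Sum>\<beta>2\<in>B. Z \<alpha>2 \<beta>2 * Z a2 \<beta>2) * K (a1, u) (a2, w))"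
    by (intro sum.cong refl) (simp add: sum_distrib_left sum_distrib_right mult.assoc, rule sum.swap)
  also have "\<dots> = (\<Sum>a1\<in>UNIV. \<Sum>a2\<in>UNIV. if a1 = \<alpha>1 \<and> a2 = \<alpha>2 then K (a1, u) (a2, w) else 0)"
    by (intro sum.cong refl) (auto simp: Zrow)
  also have "\<dots> = (\<Sum>a1\<in>UNIV. if a1 = \<alpha>1 then (\<Sum>a2\<in>UNIV. if a2 = \<alpha>2 then K (\<alpha>1, u) (\<alpha>2, w) else 0) else 0)"
    by (intro sum.cong refl) auto
  also have "\<dots> = K (\<alpha>1, u) (\<alpha>2, w)"
    by simp
  finally show ?thesis by simp
qed

lemma linv_eq:
  assumes K1: "linv K1" and K2: "linv K2"
    and eq: "\<And>n \<rho> b b' u w. (n, \<rho>) \<in> Rt \<Longrightarrow> b < n \<Longrightarrow> b' < n \<Longrightarrow>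
       (\<Sum>\<gamma>\<in>UNIV. \<rho> \<gamma> b b' * K1 (0, u) (\<gamma>, w)) = (\<Sum>\<gamma>\<in>UNIV. \<rho> \<gamma> b b' * K2 (0, u) (\<gamma>, w))"
  shows "K1 = K2"
proof -
  have P: "Psi Z K1 (\<beta>1, u) (\<beta>2, w) = Psi Z K2 (\<beta>1, u) (\<beta>2, w)" if b: "\<beta>1 \<in> B" "\<beta>2 \<in> B" for \<beta>1 \<beta>2 u w
  proof -
    obtain n \<rho> a b n' \<rho>' a' b' where bb: "\<beta>1 = ((n, \<rho>), a, b)" "\<beta>2 = ((n', \<rho>'), a', b')"
      by (metis prod.collapse)
    have r: "(n, \<rho>) \<in> Rt" "b < n" "b' < n'" using b bb by (auto simp: blockB_def)
    show ?thesis
    proof (cases "(n, \<rho>) = (n', \<rho>') \<and> a = a'")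
      case True
      then show ?thesis unfolding Psi_inv[OF K1 b] Psi_inv[OF K2 b] unfolding bb blockrep_eq
        using eq[OF r(1,2), of b'] r(3) by simp
    next
      case False
      then show ?thesis unfolding Psi_inv[OF K1 b] Psi_inv[OF K2 b] unfolding bb blockrep_eq by auto
    qed
  qed
  have "K1 (\<alpha>1, u) (\<alpha>2, w) = K2 (\<alpha>1, u) (\<alpha>2, w)" for \<alpha>1 u \<alpha>2 w
    unfolding Psi_invert[of K1] Psi_invert[of K2] using P by (intro sum.cong refl) auto
  then show ?thesis by (intro ext) (metis prod.collapse)
qed

lemma triv_ex: "\<exists>\<tau>. (1, \<tau>) \<in> Rt \<and> (\<forall>\<gamma>. \<tau> \<gamma> 0 0 = 1)"
proof -
  let ?s = "\<lambda>(\<gamma>::'g) (i::nat) (j::nat). (1::real)"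
  have rep: "is_rep 1 ?s" unfolding is_rep_def by simp
  have irr1: "rep_irreducible 1 ?s"
    unfolding rep_irreducible_def
  proof (intro conjI allI impI)
    fix S :: "(nat \<Rightarrow> real) set"
    assume S: "is_lsubspace 1 S \<and> (\<forall>\<gamma>. \<forall>x\<in>S. mvec 1 (?s \<gamma>) x \<in> S)"
    show "S = {\<lambda>_. 0} \<or> S = vecs 1"
    proof (cases "\<exists>x\<in>S. x \<noteq> (\<lambda>_. 0)")
      case False
      then show ?thesis using S unfolding is_lsubspace_def by auto
    next
      case True
      then obtain x where x: "x \<in> S" "x \<noteq> (\<lambda>_. 0)" by blast
      have xv: "x \<in> vecs 1" using S x unfolding is_lsubspace_def by auto
      have x0: "x 0 \<noteq> 0"
      proof
        assume x00: "x 0 = 0"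
        have "x = (\<lambda>_. 0)"
        proof
          fix i show "x i = 0" using x00 xv unfolding vecs_def by (cases "i = 0") auto
        qed
        with x(2) show False by simp
      qed
      have "vecs 1 \<subseteq> S"
      proof
        fix y :: "nat \<Rightarrow> real" assume y: "y \<in> vecs 1"
        have "(\<lambda>i. (y 0 / x 0) * x i) \<in> S" using S x unfolding is_lsubspace_def by blast
        moreover have "(\<lambda>i. (y 0 / x 0) * x i) = y"
        proof
          fix i show "(y 0 / x 0) * x i = y i"
            using x0 xv y unfolding vecs_def by (cases "i = 0") auto
        qed
        ultimately show "y \<in> S" by simp
      qed
      then show ?thesis using S unfolding is_lsubspace_def by auto
    qed
  qed simp
  have "\<forall>n (\<sigma> :: 'g \<Rightarrow> nat \<Rightarrow> nat \<Rightarrow> real). is_rep n \<sigma> \<and> rep_irreducible n \<sigma> \<longrightarrow>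
        (\<exists>(m, \<tau>)\<in>Rt. rep_equiv n \<sigma> m \<tau>)"
    using irr unfolding irrep_reps_def by (rule conjunct2[THEN conjunct2])
  then have "\<exists>(m, \<tau>)\<in>Rt. rep_equiv 1 ?s m \<tau>" using rep irr1 by blast
  then obtain m \<tau> where mt: "(m, \<tau>) \<in> Rt" "rep_equiv 1 ?s m \<tau>" by blast
  then obtain T S where TS: "m = 1" "T 0 0 * S 0 0 = 1" "\<forall>\<gamma>. T 0 0 * 1 = \<tau> \<gamma> 0 0 * T 0 0"
    unfolding rep_equiv_def by auto
  have "T 0 0 \<noteq> 0" using TS(2) by auto
  then have "\<forall>\<gamma>. \<tau> \<gamma> 0 0 = 1" using TS(3) by (metis mult_cancel_right2 mult.commute)
  then show ?thesis using mt TS(1) by blast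
qed

end

context pf
begin

lemma intw_span0:
  assumes r: "(n, \<rho>) \<in> Rt" and x: "x \<in> span ((\<lambda>i. Tsel i (n, \<rho>) 0) ` Iset (n, \<rho>))"
  shows "\<exists>F. intw \<theta> n \<rho> F \<and> F 0 = x"
proof (rule span_induct[OF x])
  show "subspace {x. \<exists>F. intw \<theta> n \<rho> F \<and> F 0 = x}"
  proof (rule subspaceI)
    show "0 \<in> {x. \<exists>F. intw \<theta> n \<rho> F \<and> F 0 = x}"
      by (intro CollectI exI[of _ "\<lambda>_. 0"]) (simp add: intw_def th_lin)
    fix x y assume "x \<in> {x. \<exists>F. intw \<theta> n \<rho> F \<and> F 0 = x}" "y \<in> {x. \<exists>F. intw \<theta> n \<rho> F \<and> F 0 = x}"
    then obtain F G where "intw \<theta> n \<rho> F" "F 0 = x" "intw \<theta> n \<rho> G" "G 0 = y" by auto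
    then show "x + y \<in> {x. \<exists>F. intw \<theta> n \<rho> F \<and> F 0 = x}"
      using intw_add[of n \<rho> F G 1 1] by auto
  next
    fix c x assume "x \<in> {x. \<exists>F. intw \<theta> n \<rho> F \<and> F 0 = x}"
    then obtain F where "intw \<theta> n \<rho> F" "F 0 = x" by auto
    then show "c *\<^sub>R x \<in> {x. \<exists>F. intw \<theta> n \<rho> F \<and> F 0 = x}"
      using intw_add[of n \<rho> F F c 0] by auto
  qed
next
  fix x assume "x \<in> (\<lambda>i. Tsel i (n, \<rho>) 0) ` Iset (n, \<rho>)"
  then obtain i where i: "i \<in> Iset (n, \<rho>)" "x = Tsel i (n, \<rho>) 0" by auto
  then have "subrep_equiv \<theta> (W i) (n, \<rho>)" unfolding Iset_def by auto
  then show "\<exists>F. intw \<theta> n \<rho> F \<and> F 0 = x" using Tsel i(2) by blast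
qed

lemma A0_indep:
  assumes r: "(n, \<rho>) \<in> Rt"
  shows "inj_on (\<lambda>i. Tsel i (n, \<rho>) 0) (Iset (n, \<rho>))" "independent ((\<lambda>i. Tsel i (n, \<rho>) 0) ` Iset (n, \<rho>))"
proof -
  have n0: "0 < n" using Rt_pos[OF r] .
  have K: "\<forall>i\<in>Iset (n, \<rho>). c i = 0" if c: "(\<Sum>i\<in>Iset (n, \<rho>). c i *\<^sub>R Tsel i (n, \<rho>) 0) = 0" for c
  proof -
    define w where "w = (\<lambda>i. if i \<in> Iset (n, \<rho>) then c i *\<^sub>R Tsel i (n, \<rho>) 0 else 0)"
    have TW: "Tsel i (n, \<rho>) 0 \<in> W i" if "i \<in> Iset (n, \<rho>)" for i
    proof -
      have sr: "subrep_equiv \<theta> (W i) (n, \<rho>)" using that unfolding Iset_def by auto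
      have "Tsel i (n, \<rho>) 0 \<in> span (Tsel i (n, \<rho>) ` {..<n})" using n0 by (intro span_base) auto
      then show ?thesis using Tsel[OF sr] by simp
    qed
    have w1: "\<forall>i<kk. w i \<in> W i"
      unfolding w_def using TW W_sub by (auto intro: subspace_scale subspace_0)
    have w2: "\<forall>i\<ge>kk. w i = 0" unfolding w_def Iset_def by auto
    have "(\<Sum>i<kk. w i) = (\<Sum>i\<in>Iset (n, \<rho>). c i *\<^sub>R Tsel i (n, \<rho>) 0)"
      unfolding w_def by (rule sum.mono_neutral_cong_right) (auto simp: Iset_def)
    then have w3: "0 = (\<Sum>i<kk. w i)" using c by simp
    have "dec 0 = w" by (rule dec_unique[OF w1 w2 w3])
    then have "w = (\<lambda>_. 0)" using dec_zero by simp
    show ?thesis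
    proof
      fix i assume i: "i \<in> Iset (n, \<rho>)"
      have "w i = 0" using \<open>w = (\<lambda>_. 0)\<close> by simp
      then have "c i *\<^sub>R Tsel i (n, \<rho>) 0 = 0" unfolding w_def using i by simp
      moreover have "Tsel i (n, \<rho>) 0 \<noteq> 0" using Tsel0[OF _ n0] i unfolding Iset_def by simp
      ultimately show "c i = 0" by simp
    qed
  qed
  note kk = kernel_inj_indep_set[where y="\<lambda>i. Tsel i (n, \<rho>) 0", OF Iset_finite K]
  show "inj_on (\<lambda>i. Tsel i (n, \<rho>) 0) (Iset (n, \<rho>))" by (rule kk(1))
  show "independent ((\<lambda>i. Tsel i (n, \<rho>) 0) ` Iset (n, \<rho>))" by (rule kk(2))
qed

lemma onb_intw:
  assumes r: "(n, \<rho>) \<in> Rt" and E: "finite E" "card E \<le> card (Iset (n, \<rho>))"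
  shows "\<exists>Fo. (\<forall>e\<in>E. intw \<theta> n \<rho> (Fo e)) \<and>
     (\<forall>e\<in>E. \<forall>e'\<in>E. \<forall>b<n. \<forall>b'<n. Fo e b \<bullet> Fo e' b' = (if e = e' \<and> b = b' then 1 else 0))"
proof -
  let ?A = "(\<lambda>i. Tsel i (n, \<rho>) 0) ` Iset (n, \<rho>)"
  obtain Bo where Bo: "Bo \<subseteq> span ?A" "pairwise orthogonal Bo" "\<And>x. x \<in> Bo \<Longrightarrow> norm x = 1"
    "independent Bo" "card Bo = dim (span ?A)" "span Bo = span ?A"
    using orthonormal_basis_subspace[of "span ?A"] by auto
  have cA: "card Bo = card (Iset (n, \<rho>))"
    using Bo(5) dim_span_eq_card_independent[OF A0_indep(2)[OF r]] card_image[OF A0_indep(1)[OF r]] by simp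
  have fB: "finite Bo" using Bo(4) by (rule finiteI_independent)
  obtain g where g: "g ` E \<subseteq> Bo" "inj_on g E"
    using card_le_inj[OF E(1) fB] E(2) cA by auto
  define Fo where "Fo = (\<lambda>e. SOME F. intw \<theta> n \<rho> F \<and> F 0 = g e)"
  have Fo: "intw \<theta> n \<rho> (Fo e) \<and> Fo e 0 = g e" if "e \<in> E" for e
  proof -
    have "g e \<in> span ?A" using g Bo(1) that by auto
    then show ?thesis unfolding Fo_def by (rule someI_ex[OF intw_span0[OF r]])
  qed
  have gg: "g e \<bullet> g e' = (if e = e' then 1 else 0)" if "e \<in> E" "e' \<in> E" for e e'
  proof (cases "e = e'")
    case True
    then have "norm (g e) = 1" using Bo(3) g that by auto
    then show ?thesis using True by (simp add: norm_eq_1)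
  next
    case False
    then have "g e \<noteq> g e'" using g(2) that by (auto simp: inj_on_def)
    then show ?thesis using Bo(2) g that False unfolding pairwise_def orthogonal_def by auto
  qed
  show ?thesis
  proof (intro exI conjI ballI allI impI)
    fix e assume "e \<in> E" then show "intw \<theta> n \<rho> (Fo e)" using Fo by blast
  next
    fix e e' b b' assume ee: "e \<in> E" "e' \<in> E" and bb: "b < n" "b' < n"
    show "Fo e b \<bullet> Fo e' b' = (if e = e' \<and> b = b' then 1 else 0)"
      using intw_inner[OF r Fo[OF ee(1), THEN conjunct1] Fo[OF ee(2), THEN conjunct1] bb]
        Fo[OF ee(1)] Fo[OF ee(2)] gg[OF ee] by auto
  qed
qed

end

lemma collapse3:
  fixes f :: "nat \<times> 'c \<Rightarrow> 'e \<Rightarrow> nat \<Rightarrow> real" and R :: "(nat \<times> 'c) set"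
  assumes s: "s \<in> R" "e \<in> E s" and fin: "finite R" "\<forall>s\<in>R. finite (E s)"
  shows "(\<Sum>s'\<in>R. \<Sum>e'\<in>E s'. \<Sum>l<fst s'. f s' e' l * (if s = s' \<and> e = e' then g l else 0))
       = (\<Sum>l<fst s. f s e l * g l)"
proof -
  have "(\<Sum>s'\<in>R. \<Sum>e'\<in>E s'. \<Sum>l<fst s'. f s' e' l * (if s = s' \<and> e = e' then g l else 0))
      = (\<Sum>s'\<in>R. if s' = s then (\<Sum>e'\<in>E s'. \<Sum>l<fst s'. f s' e' l * (if e = e' then g l else 0)) else 0)"
    by (rule sum.cong[OF refl]) auto
  also have "\<dots> = (\<Sum>e'\<in>E s. \<Sum>l<fst s. f s e' l * (if e = e' then g l else 0))"
    using s fin by simp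
  also have "\<dots> = (\<Sum>e'\<in>E s. if e' = e then (\<Sum>l<fst s. f s e l * g l) else 0)"
    by (intro sum.cong refl) auto
  also have "\<dots> = (\<Sum>l<fst s. f s e l * g l)" using s fin by simp
  finally show ?thesis .
qed

lemma swap_in: "(\<Sum>\<gamma>\<in>G. (a \<gamma> :: real) * (\<Sum>x\<in>A. h x \<gamma>)) = (\<Sum>x\<in>A. \<Sum>\<gamma>\<in>G. a \<gamma> * h x \<gamma>)"
  by (simp add: sum_distrib_left) (rule sum.swap)

context pf
begin

lemma G_inner:
  assumes FoI: "\<And>r e. r \<in> Rt \<Longrightarrow> e \<in> E r \<Longrightarrow> intw \<theta> (fst r) (snd r) (Fo r e)"
    and FoO: "\<And>r e e' b b'. r \<in> Rt \<Longrightarrow> e \<in> E r \<Longrightarrow> e' \<in> E r \<Longrightarrow> b < fst r \<Longrightarrow> b' < fst r \<Longrightarrow>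
        Fo r e b \<bullet> Fo r e' b' = (if e = e' \<and> b = b' then 1 else 0)"
    and s: "s \<in> Rt" "s' \<in> Rt" "e \<in> E s" "e' \<in> E s'" "k < fst s" "l < fst s'"
  shows "Fo s e k \<bullet> (\<theta> \<gamma> *v Fo s' e' l) = (if s = s' \<and> e = e' then snd s \<gamma> k l else 0)"
proof -
  have "Fo s e k \<bullet> (\<theta> \<gamma> *v Fo s' e' l) = Fo s e k \<bullet> (\<Sum>l'<fst s'. snd s' \<gamma> l' l *\<^sub>R Fo s' e' l')"
    using FoI[OF s(2,4)] s(6) unfolding intw_def by simp
  also have "\<dots> = (\<Sum>l'<fst s'. snd s' \<gamma> l' l * (Fo s e k \<bullet> Fo s' e' l'))"
    by (simp add: inner_sum_right)
  also have "\<dots> = (if s = s' \<and> e = e' then snd s \<gamma> k l else 0)"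
  proof (cases "s = s'")
    case False
    obtain n \<rho> m \<sigma> where nm: "s = (n, \<rho>)" "s' = (m, \<sigma>)" by (metis prod.collapse)
    have "Fo s e k \<bullet> Fo s' e' l' = 0" if "l' < fst s'" for l'
      using intw_cross[of n \<rho> m \<sigma> "Fo s e" "Fo s' e'" k l'] FoI[OF s(1,3)] FoI[OF s(2,4)] s False that nm
      by auto
    then show ?thesis using False by simp
  next
    case True
    then have "(\<Sum>l'<fst s'. snd s' \<gamma> l' l * (Fo s e k \<bullet> Fo s' e' l')) = (\<Sum>l'<fst s. snd s \<gamma> l' l * (if e = e' \<and> k = l' then 1 else 0))"
      using FoO s by (intro sum.cong refl) auto
    also have "\<dots> = (\<Sum>l'<fst s. if l' = k then (if e = e' then snd s \<gamma> k l else 0) else 0)"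
      by (intro sum.cong refl) auto
    also have "\<dots> = (if e = e' then snd s \<gamma> k l else 0)" using s by simp
    finally show ?thesis using True by simp
  qed
  finally show ?thesis .
qed

lemma sum_th_intw:
  assumes r: "(n, \<rho>) \<in> Rt" and F: "intw \<theta> n \<rho> F" and k: "k < n"
  shows "(\<Sum>\<alpha>\<in>UNIV. \<theta> \<alpha> *v F k) = (\<Sum>k'<n. (\<Sum>\<alpha>\<in>UNIV. \<rho> \<alpha> k' k) *\<^sub>R F k')"
proof -
  have "(\<Sum>\<alpha>\<in>UNIV. \<theta> \<alpha> *v F k) = (\<Sum>\<alpha>\<in>UNIV. \<Sum>k'<n. \<rho> \<alpha> k' k *\<^sub>R F k')"
    using F k unfolding intw_def by simp
  also have "\<dots> = (\<Sum>k'<n. (\<Sum>\<alpha>\<in>UNIV. \<rho> \<alpha> k' k) *\<^sub>R F k')"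
    by (subst sum.swap) (simp add: scaleR_sum_left)
  finally show ?thesis .
qed

lemma sum_coef_nontriv:
  assumes t: "(1, \<tau>) \<in> Rt" "\<forall>\<gamma>. \<tau> \<gamma> 0 0 = 1" and r: "(n, \<rho>) \<in> Rt" "(n, \<rho>) \<noteq> (1, \<tau>)"
    and k: "k' < n" "k < n"
  shows "(\<Sum>\<alpha>\<in>UNIV. \<rho> \<alpha> k' k) = 0"
  using ortho[OF r(1) t(1) k, of 0 0] t(2) r(2) by auto

lemma sum_coef_triv:
  assumes t: "(1, \<tau>) \<in> Rt" "\<forall>\<gamma>. \<tau> \<gamma> 0 0 = 1"
  shows "(\<Sum>\<alpha>\<in>UNIV. \<tau> \<alpha> 0 0) = real CARD('g)"
  using t(2) by simp

end

lemma swap4: "(\<Sum>a\<in>A. \<Sum>s\<in>S. \<Sum>e\<in>E s. \<Sum>k\<in>K s. f a s e k) = (\<Sum>s\<in>S. \<Sum>e\<in>E s. \<Sum>k\<in>K s. \<Sum>a\<in>A. f a s e k)"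
  by (rule trans[OF sum.swap], rule sum.cong[OF refl], rule trans[OF sum.swap], rule sum.cong[OF refl], rule sum.swap)

context pf
begin

lemma sum_y_zero:
  assumes L: "L \<in> LapGamma" and Ly: "L = gram y"
  shows "(\<Sum>i\<in>UNIV. y i) = 0"
proof -
  have "(\<Sum>i\<in>UNIV. y i) \<bullet> (\<Sum>j\<in>UNIV. y j) = (\<Sum>i\<in>UNIV. \<Sum>j\<in>UNIV. L i j)"
    unfolding Ly gram_def inner_sum_left by (simp add: inner_sum_right)
  also have "\<dots> = 0"
  proof -
    have rs: "(\<Sum>j\<in>UNIV. L i j) = 0" for i using L unfolding LapGamma_def by blast
    show ?thesis by (simp add: rs)
  qed
  finally show ?thesis by simp
qed

lemma supset:
  fixes L :: "'g \<times> 'v::finite \<Rightarrow> 'g \<times> 'v \<Rightarrow> real"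
  assumes L: "L \<in> LapGamma"
    and rk: "\<forall>r\<in>Rt. mat_rank ({..<fst r} \<times> UNIV) ({..<fst r} \<times> UNIV) (Xblock (Psi Z L) r) \<le> rep_multiplicity \<theta> kk W r"
  shows "\<exists>q \<in> Ctheta \<theta>. Psi Z (gram q) = Psi Z L"
proof -
  obtain y :: "'g \<times> 'v \<Rightarrow> real^('g \<times> 'v)" where Ly: "L = gram y" using Lap_factor[OF L] by blast
  define Ey where "Ey = (\<lambda>r. (\<lambda>(b, u). Yv Z y (r, 0, b) u) ` ({..<fst r} \<times> (UNIV::'v set)))"
  have dimE: "dim (Ey r) \<le> card (Iset r)" if r: "r \<in> Rt" for r
  proof -
    obtain n \<rho> where nr: "r = (n, \<rho>)" by (cases r)
    have "mat_rank ({..<fst r} \<times> UNIV) ({..<fst r} \<times> UNIV) (Xblock (Psi Z (gram y)) r) = dim (Ey r)"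
      unfolding Ey_def nr fst_conv by (rule rank_gram_Y)
    then show ?thesis using rk r Ly Iset_card[of r] by auto
  qed
  define P where "P = (\<lambda>r E. E \<subseteq> span (Ey r) \<and> pairwise orthogonal E \<and> (\<forall>x\<in>E. norm x = 1) \<and>
      independent E \<and> card E = dim (Ey r) \<and> span E = span (Ey r))"
  have Eex: "\<exists>E. P r E" for r
  proof -
    obtain Bo where "Bo \<subseteq> span (Ey r)" "pairwise orthogonal Bo" "\<And>x. x \<in> Bo \<Longrightarrow> norm x = 1"
      "independent Bo" "card Bo = dim (span (Ey r))" "span Bo = span (Ey r)"
      using orthonormal_basis_subspace[of "span (Ey r)"] by auto
    then show ?thesis unfolding P_def by (intro exI[of _ Bo]) (simp add: dim_span)
  qed
  define E where "E = (\<lambda>r. SOME E. P r E)"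
  have EP: "P r (E r)" for r unfolding E_def by (rule someI_ex[OF Eex])
  have Efin: "finite (E r)" for r using EP[of r] unfolding P_def using finiteI_independent by blast
  have Eorth: "pairwise orthogonal (E r)" "\<And>x. x \<in> E r \<Longrightarrow> norm x = 1" "span (E r) = span (Ey r)" for r
    using EP[of r] unfolding P_def by auto
  have Ecard: "card (E r) \<le> card (Iset r)" if "r \<in> Rt" for r
    using EP[of r] dimE[OF that] unfolding P_def by simp
  define Q where "Q = (\<lambda>r Fo. (\<forall>e\<in>E r. intw \<theta> (fst r) (snd r) (Fo e)) \<and>
     (\<forall>e\<in>E r. \<forall>e'\<in>E r. \<forall>b<fst r. \<forall>b'<fst r. Fo e b \<bullet> Fo e' b' = (if e = e' \<and> b = b' then 1 else 0)))"
  have Foex: "\<exists>Fo. Q r Fo" if r: "r \<in> Rt" for r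
  proof -
    obtain n \<rho> where nr: "r = (n, \<rho>)" by (cases r)
    show ?thesis unfolding Q_def nr fst_conv snd_conv
      by (rule onb_intw) (use r nr Efin Ecard[OF r] in auto)
  qed
  define Fo where "Fo = (\<lambda>r. SOME Fo. Q r Fo)"
  have FoQ: "Q r (Fo r)" if "r \<in> Rt" for r unfolding Fo_def by (rule someI_ex[OF Foex[OF that]])
  have FoI: "\<And>r e. r \<in> Rt \<Longrightarrow> e \<in> E r \<Longrightarrow> intw \<theta> (fst r) (snd r) (Fo r e)"
    using FoQ unfolding Q_def by blast
  have FoO: "\<And>r e e' b b'. r \<in> Rt \<Longrightarrow> e \<in> E r \<Longrightarrow> e' \<in> E r \<Longrightarrow> b < fst r \<Longrightarrow> b' < fst r \<Longrightarrow>
        Fo r e b \<bullet> Fo r e' b' = (if e = e' \<and> b = b' then 1 else 0)"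
    using FoQ unfolding Q_def by blast
  define c where "c = (\<lambda>s e k u. (Yv Z y (s, 0, k) u \<bullet> e) / sqrt (bt (snd s)))"
  define p where "p = (\<lambda>u. \<Sum>s\<in>Rt. \<Sum>e\<in>E s. \<Sum>k<fst s. c s e k u *\<^sub>R Fo s e k)"
  define q where "q = (\<lambda>(\<alpha>, u). \<theta> \<alpha> *v p u)"
  have qc: "compatible \<theta> q" unfolding compatible_def q_def by (simp add: th_add)
  have q0: "q (0, u) = p u" for u unfolding q_def by (simp add: th_zero)
  obtain \<tau> where tau: "(1, \<tau>) \<in> Rt" "\<forall>\<gamma>. \<tau> \<gamma> 0 0 = 1" using triv_ex by blast
  have Rfin: "finite Rt" by (rule Rt_finite)
  have sa: "(\<Sum>\<alpha>\<in>UNIV. \<theta> \<alpha> *v p u) = (\<Sum>e\<in>E (1, \<tau>). (real CARD('g) * c (1, \<tau>) e 0 u) *\<^sub>R Fo (1, \<tau>) e 0)" for u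
  proof -
    have "(\<Sum>\<alpha>\<in>UNIV. \<theta> \<alpha> *v p u) = (\<Sum>\<alpha>\<in>UNIV. \<Sum>s\<in>Rt. \<Sum>e\<in>E s. \<Sum>k<fst s. c s e k u *\<^sub>R (\<theta> \<alpha> *v Fo s e k))"
      unfolding p_def by (simp add: th_lin)
    also have "\<dots> = (\<Sum>s\<in>Rt. \<Sum>e\<in>E s. \<Sum>k<fst s. c s e k u *\<^sub>R (\<Sum>\<alpha>\<in>UNIV. \<theta> \<alpha> *v Fo s e k))"
      by (subst swap4) (simp add: scaleR_sum_right)
    also have "\<dots> = (\<Sum>s\<in>Rt. \<Sum>e\<in>E s. \<Sum>k<fst s. if s = (1, \<tau>) then (real CARD('g) * c s e k u) *\<^sub>R Fo s e k else 0)"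
    proof (intro sum.cong refl)
      fix s e k assume s: "s \<in> Rt" "e \<in> E s" "k \<in> {..<fst s}"
      obtain n \<rho> where nr: "s = (n, \<rho>)" by (cases s)
      have "(\<Sum>\<alpha>\<in>UNIV. \<theta> \<alpha> *v Fo s e k) = (\<Sum>k'<n. (\<Sum>\<alpha>\<in>UNIV. \<rho> \<alpha> k' k) *\<^sub>R Fo s e k')"
        using sum_th_intw[of n \<rho> "Fo s e" k] FoI[OF s(1,2)] s nr by simp
      also have "\<dots> = (if s = (1, \<tau>) then real CARD('g) *\<^sub>R Fo s e k else 0)"
      proof (cases "s = (1, \<tau>)")
        case True
        then have n1: "n = 1" "\<rho> = \<tau>" using nr by auto
        then have "k = 0" using s nr by simp
        then show ?thesis using True n1 tau(2) by simp
      next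
        case False
        have "(\<Sum>\<alpha>\<in>UNIV. \<rho> \<alpha> k' k) = 0" if "k' < n" for k'
          using sum_coef_nontriv[OF tau, of n \<rho> k' k] s nr False that by simp
        then show ?thesis using False by simp
      qed
      finally show "c s e k u *\<^sub>R (\<Sum>\<alpha>\<in>UNIV. \<theta> \<alpha> *v Fo s e k) =
          (if s = (1, \<tau>) then (real CARD('g) * c s e k u) *\<^sub>R Fo s e k else 0)" by simp
    qed
    also have "\<dots> = (\<Sum>s\<in>Rt. if s = (1, \<tau>) then (\<Sum>e\<in>E s. \<Sum>k<fst s. (real CARD('g) * c s e k u) *\<^sub>R Fo s e k) else 0)"
      by (rule sum.cong[OF refl]) auto
    also have "\<dots> = (\<Sum>e\<in>E (1, \<tau>). (real CARD('g) * c (1, \<tau>) e 0 u) *\<^sub>R Fo (1, \<tau>) e 0)"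
      using tau(1) Rfin by simp
    finally show ?thesis .
  qed
  have sumq: "(\<Sum>i\<in>UNIV. q i) = 0"
  proof -
    have "(\<Sum>i\<in>UNIV. q i) = (\<Sum>\<alpha>\<in>UNIV. \<Sum>u\<in>UNIV. q (\<alpha>, u))"
      by (simp add: sum.cartesian_product UNIV_Times_UNIV[symmetric] del: UNIV_Times_UNIV)
    also have "\<dots> = (\<Sum>u\<in>UNIV. \<Sum>\<alpha>\<in>UNIV. \<theta> \<alpha> *v p u)"
      unfolding q_def by (subst sum.swap) simp
    also have "\<dots> = (\<Sum>u\<in>UNIV. \<Sum>e\<in>E (1, \<tau>). (real CARD('g) * c (1, \<tau>) e 0 u) *\<^sub>R Fo (1, \<tau>) e 0)"
      by (simp add: sa)
    also have "\<dots> = (\<Sum>e\<in>E (1, \<tau>). (real CARD('g) * (\<Sum>u\<in>UNIV. c (1, \<tau>) e 0 u)) *\<^sub>R Fo (1, \<tau>) e 0)"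
      by (subst sum.swap) (simp add: scaleR_sum_left sum_distrib_left)
    also have "\<dots> = 0"
    proof -
      have Zc: "Z \<alpha> ((1, \<tau>), 0, 0) = Z 0 ((1, \<tau>), 0, 0)" for \<alpha>
        using Z0[OF tau(1), of 0 0 \<alpha>] tau(2) by simp
      have "(\<Sum>u\<in>UNIV. Yv Z y ((1, \<tau>), 0, 0) u) = Z 0 ((1, \<tau>), 0, 0) *\<^sub>R (\<Sum>u\<in>UNIV. \<Sum>\<alpha>\<in>UNIV. y (\<alpha>, u))"
      proof -
        have "(\<Sum>u\<in>UNIV. Yv Z y ((1, \<tau>), 0, 0) u) = (\<Sum>u\<in>UNIV. \<Sum>\<alpha>\<in>UNIV. Z 0 ((1, \<tau>), 0, 0) *\<^sub>R y (\<alpha>, u))"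
          unfolding Yv_def by (intro sum.cong refl, subst Zc, rule refl)
        then show ?thesis by (simp add: scaleR_sum_right)
      qed
      also have "(\<Sum>u\<in>UNIV. \<Sum>\<alpha>\<in>UNIV. y (\<alpha>, u)) = (\<Sum>i\<in>UNIV. y i)"
        by (subst sum.swap) (simp add: sum.cartesian_product UNIV_Times_UNIV[symmetric] del: UNIV_Times_UNIV)
      also have "\<dots> = 0" by (rule sum_y_zero[OF L Ly])
      finally have "(\<Sum>u\<in>UNIV. Yv Z y ((1, \<tau>), 0, 0) u) = 0" by simp
      then have "(\<Sum>u\<in>UNIV. c (1, \<tau>) e 0 u) = 0" for e
        unfolding c_def by (simp add: sum_divide_distrib[symmetric] inner_sum_left[symmetric])
      then show ?thesis by simp
    qed
    finally show ?thesis .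
  qed
  have qC: "q \<in> Ctheta \<theta>" unfolding Ctheta_def using qc sumq by simp
  have key: "(\<Sum>\<gamma>\<in>UNIV. \<rho> \<gamma> b b' * gram q (0, u) (\<gamma>, w)) = (\<Sum>\<gamma>\<in>UNIV. \<rho> \<gamma> b b' * L (0, u) (\<gamma>, w))"
    if r: "(n, \<rho>) \<in> Rt" "b < n" "b' < n" for n \<rho> b b' u w
  proof -
    have Phi: "gram q (0, u) (\<gamma>, w) = (\<Sum>s\<in>Rt. \<Sum>e\<in>E s. \<Sum>k<fst s. \<Sum>l<fst s. c s e k u * c s e l w * snd s \<gamma> k l)" for \<gamma>
    proof -
      have "gram q (0, u) (\<gamma>, w) = p u \<bullet> (\<theta> \<gamma> *v p w)" unfolding gram_def q_def by (simp add: th_zero)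
      also have "\<dots> = (\<Sum>s\<in>Rt. \<Sum>e\<in>E s. \<Sum>k<fst s. c s e k u * (Fo s e k \<bullet> (\<theta> \<gamma> *v p w)))"
        unfolding p_def by (simp add: inner_sum_left)
      also have "\<dots> = (\<Sum>s\<in>Rt. \<Sum>e\<in>E s. \<Sum>k<fst s. c s e k u * (\<Sum>l<fst s. c s e l w * snd s \<gamma> k l))"
      proof (intro sum.cong refl)
        fix s e k assume s: "s \<in> Rt" "e \<in> E s" "k \<in> {..<fst s}"
        have "Fo s e k \<bullet> (\<theta> \<gamma> *v p w) = (\<Sum>s'\<in>Rt. \<Sum>e'\<in>E s'. \<Sum>l<fst s'. c s' e' l w * (Fo s e k \<bullet> (\<theta> \<gamma> *v Fo s' e' l)))"
          unfolding p_def by (simp add: th_lin inner_sum_right)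
        also have "\<dots> = (\<Sum>s'\<in>Rt. \<Sum>e'\<in>E s'. \<Sum>l<fst s'. c s' e' l w * (if s = s' \<and> e = e' then snd s \<gamma> k l else 0))"
          by (intro sum.cong refl) (use G_inner[of E Fo, OF FoI FoO] s in auto)
        also have "\<dots> = (\<Sum>l<fst s. c s e l w * snd s \<gamma> k l)"
          by (rule collapse3) (use s Rfin Efin in auto)
        finally show "c s e k u * (Fo s e k \<bullet> (\<theta> \<gamma> *v p w)) = c s e k u * (\<Sum>l<fst s. c s e l w * snd s \<gamma> k l)"
          by simp
      qed
      also have "\<dots> = (\<Sum>s\<in>Rt. \<Sum>e\<in>E s. \<Sum>k<fst s. \<Sum>l<fst s. c s e k u * c s e l w * snd s \<gamma> k l)"
        by (simp add: sum_distrib_left mult.assoc)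
      finally show ?thesis .
    qed
    have "(\<Sum>\<gamma>\<in>UNIV. \<rho> \<gamma> b b' * gram q (0, u) (\<gamma>, w))
        = (\<Sum>\<gamma>\<in>UNIV. \<rho> \<gamma> b b' * (\<Sum>s\<in>Rt. \<Sum>e\<in>E s. \<Sum>k<fst s. \<Sum>l<fst s. c s e k u * c s e l w * snd s \<gamma> k l))"
      by (simp only: Phi)
    also have "\<dots> = (\<Sum>s\<in>Rt. \<Sum>e\<in>E s. \<Sum>k<fst s. \<Sum>l<fst s. \<Sum>\<gamma>\<in>UNIV. \<rho> \<gamma> b b' * (c s e k u * c s e l w * snd s \<gamma> k l))"
      by (simp only: swap_in)
    also have "\<dots> = (\<Sum>s\<in>Rt. \<Sum>e\<in>E s. \<Sum>k<fst s. \<Sum>l<fst s. c s e k u * c s e l w * (if (n, \<rho>) = s \<and> b = k \<and> b' = l then bt \<rho> else 0))"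
    proof (intro sum.cong refl)
      fix s e k l assume s: "s \<in> Rt" "e \<in> E s" "k \<in> {..<fst s}" "l \<in> {..<fst s}"
      obtain m \<sigma> where ms: "s = (m, \<sigma>)" by (cases s)
      have "(\<Sum>\<gamma>\<in>UNIV. \<rho> \<gamma> b b' * snd s \<gamma> k l) = (if (n, \<rho>) = s \<and> b = k \<and> b' = l then bt \<rho> else 0)"
        using ortho[OF r(1) s(1)[unfolded ms] r(2,3), of k l] s ms by auto
      moreover have "(\<Sum>\<gamma>\<in>UNIV. \<rho> \<gamma> b b' * (c s e k u * c s e l w * snd s \<gamma> k l))
          = c s e k u * c s e l w * (\<Sum>\<gamma>\<in>UNIV. \<rho> \<gamma> b b' * snd s \<gamma> k l)"
        by (simp add: sum_distrib_left mult_ac)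
      ultimately show "(\<Sum>\<gamma>\<in>UNIV. \<rho> \<gamma> b b' * (c s e k u * c s e l w * snd s \<gamma> k l))
          = c s e k u * c s e l w * (if (n, \<rho>) = s \<and> b = k \<and> b' = l then bt \<rho> else 0)" by simp
    qed
    also have "\<dots> = (\<Sum>s\<in>Rt. if s = (n, \<rho>) then (\<Sum>e\<in>E s. \<Sum>k<fst s. \<Sum>l<fst s. c s e k u * c s e l w * (if b = k \<and> b' = l then bt \<rho> else 0)) else 0)"
      by (rule sum.cong[OF refl]) auto
    also have "\<dots> = (\<Sum>e\<in>E (n, \<rho>). \<Sum>k<n. \<Sum>l<n. c (n, \<rho>) e k u * c (n, \<rho>) e l w * (if b = k \<and> b' = l then bt \<rho> else 0))"
      using r Rfin by simp
    also have "\<dots> = (\<Sum>e\<in>E (n, \<rho>). c (n, \<rho>) e b u * c (n, \<rho>) e b' w * bt \<rho>)"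
    proof (rule sum.cong[OF refl])
      fix e
      have inner: "(\<Sum>l<n. c (n, \<rho>) e k u * c (n, \<rho>) e l w * (if b = k \<and> b' = l then bt \<rho> else 0))
          = (if k = b then c (n, \<rho>) e b u * c (n, \<rho>) e b' w * bt \<rho> else 0)" for k
      proof (cases "k = b")
        case True
        have "(\<Sum>l<n. c (n, \<rho>) e k u * c (n, \<rho>) e l w * (if b = k \<and> b' = l then bt \<rho> else 0))
            = (\<Sum>l<n. if l = b' then c (n, \<rho>) e k u * c (n, \<rho>) e l w * bt \<rho> else 0)"
          using True by (intro sum.cong refl) auto
        then show ?thesis using True r(3) by simp
      next
        case False
        then show ?thesis by simp
      qed
      show "(\<Sum>k<n. \<Sum>l<n. c (n, \<rho>) e k u * c (n, \<rho>) e l w * (if b = k \<and> b' = l then bt \<rho> else 0))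
          = c (n, \<rho>) e b u * c (n, \<rho>) e b' w * bt \<rho>"
        unfolding inner using r(2) by simp
    qed
    also have "\<dots> = (\<Sum>e\<in>E (n, \<rho>). (Yv Z y ((n, \<rho>), 0, b) u \<bullet> e) * (Yv Z y ((n, \<rho>), 0, b') w \<bullet> e))"
    proof (intro sum.cong refl)
      fix e
      have bp: "bt \<rho> > 0" by (rule bt_pos[OF r(1)])
      then have "sqrt (bt \<rho>) * sqrt (bt \<rho>) = bt \<rho>" by simp
      then show "c (n, \<rho>) e b u * c (n, \<rho>) e b' w * bt \<rho> = (Yv Z y ((n, \<rho>), 0, b) u \<bullet> e) * (Yv Z y ((n, \<rho>), 0, b') w \<bullet> e)"
        unfolding c_def using bp by (simp add: field_simps)
    qed
    also have "\<dots> = Yv Z y ((n, \<rho>), 0, b) u \<bullet> Yv Z y ((n, \<rho>), 0, b') w"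
    proof -
      have "Yv Z y ((n, \<rho>), 0, b') w \<in> Ey (n, \<rho>)" unfolding Ey_def using r by force
      then have "Yv Z y ((n, \<rho>), 0, b') w \<in> span (E (n, \<rho>))" using Eorth(3) span_base by blast
      then have "(\<Sum>e\<in>E (n, \<rho>). (Yv Z y ((n, \<rho>), 0, b') w \<bullet> e) *\<^sub>R e) = Yv Z y ((n, \<rho>), 0, b') w"
        using Eorth Efin by (intro orthonormal_basis_expand) auto
      then have "Yv Z y ((n, \<rho>), 0, b) u \<bullet> Yv Z y ((n, \<rho>), 0, b') w
          = Yv Z y ((n, \<rho>), 0, b) u \<bullet> (\<Sum>e\<in>E (n, \<rho>). (Yv Z y ((n, \<rho>), 0, b') w \<bullet> e) *\<^sub>R e)" by simp
      also have "\<dots> = (\<Sum>e\<in>E (n, \<rho>). (Yv Z y ((n, \<rho>), 0, b) u \<bullet> e) * (Yv Z y ((n, \<rho>), 0, b') w \<bullet> e))"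
        by (simp add: inner_sum_right mult.commute)
      finally show ?thesis by simp
    qed
    also have "\<dots> = Psi Z L (((n, \<rho>), 0, b), u) (((n, \<rho>), 0, b'), w)"
      unfolding Ly by (simp add: Psi_gram)
    also have "\<dots> = (\<Sum>\<gamma>\<in>UNIV. \<rho> \<gamma> b b' * L (0, u) (\<gamma>, w))"
      using Psi_inv[OF linv_Lap[OF L] inB[OF r(1) Rt_pos[OF r(1)] r(2)] inB[OF r(1) Rt_pos[OF r(1)] r(3)]]
      by (simp add: blockrep_eq)
    finally show ?thesis .
  qed
  have "gram q = L"
    by (rule linv_eq[OF linv_Lap[OF gram_Lap[OF qC]] linv_Lap[OF L]]) (rule key)
  then show ?thesis using qC by auto
qed

end

theorem proposition4p6:
  fixes \<theta> :: "'g::{finite,group_add} \<Rightarrow> real^'d^'d"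
    and Rt :: "(nat \<times> ('g \<Rightarrow> nat \<Rightarrow> nat \<Rightarrow> real)) set"
    and Z :: "'g \<Rightarrow> ((nat \<times> ('g \<Rightarrow> nat \<Rightarrow> nat \<Rightarrow> real)) \<times> nat \<times> nat) \<Rightarrow> real"
    and k :: nat and W :: "nat \<Rightarrow> (real^'d) set"
  assumes "abs_irred_group TYPE('g)"
    and "point_group \<theta>"
    and "irrep_reps Rt"
    and "decomp_matrix Rt Z"
    and "irred_decomp \<theta> k W"
  shows "(\<lambda>q :: 'g \<times> 'v::finite \<Rightarrow> real^'d. Psi Z (gram q)) ` Ctheta \<theta> =
    {X \<in> (Kset Z :: (((nat \<times> ('g \<Rightarrow> nat \<Rightarrow> nat \<Rightarrow> real)) \<times> nat \<times> nat) \<times> 'v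
                      \<Rightarrow> ((nat \<times> ('g \<Rightarrow> nat \<Rightarrow> nat \<Rightarrow> real)) \<times> nat \<times> nat) \<times> 'v \<Rightarrow> real) set).
       \<forall>r\<in>Rt. mat_rank ({..<fst r} \<times> UNIV) ({..<fst r} \<times> UNIV) (Xblock X r)
               \<le> rep_multiplicity \<theta> k W r}"
proof -
  interpret pf \<theta> Rt Z k W
    using assms(2-5) by unfold_locales
  show ?thesis
  proof (intro equalityI subsetI)
    fix X
    assume "X \<in> (\<lambda>q :: 'g \<times> 'v \<Rightarrow> real^'d. Psi Z (gram q)) ` Ctheta \<theta>"
    then obtain q :: "'g \<times> 'v \<Rightarrow> real^'d" where q: "q \<in> Ctheta \<theta>" "X = Psi Z (gram q)" by blast
    have "X \<in> Kset Z" unfolding Kset_def q(2) using gram_Lap[OF q(1)] by blast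
    moreover have "\<forall>r\<in>Rt. mat_rank ({..<fst r} \<times> UNIV) ({..<fst r} \<times> UNIV) (Xblock X r) \<le> rep_multiplicity \<theta> k W r"
      using rank_le q unfolding Ctheta_def by auto
    ultimately show "X \<in> {X \<in> Kset Z. \<forall>r\<in>Rt. mat_rank ({..<fst r} \<times> UNIV) ({..<fst r} \<times> UNIV) (Xblock X r)
               \<le> rep_multiplicity \<theta> k W r}" by blast
  next
    fix X :: "((nat \<times> ('g \<Rightarrow> nat \<Rightarrow> nat \<Rightarrow> real)) \<times> nat \<times> nat) \<times> 'v \<Rightarrow> ((nat \<times> ('g \<Rightarrow> nat \<Rightarrow> nat \<Rightarrow> real)) \<times> nat \<times> nat) \<times> 'v \<Rightarrow> real"
    assume X: "X \<in> {X \<in> Kset Z. \<forall>r\<in>Rt. mat_rank ({..<fst r} \<times> UNIV) ({..<fst r} \<times> UNIV) (Xblock X r)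
               \<le> rep_multiplicity \<theta> k W r}"
    then obtain L where L: "L \<in> LapGamma" "X = Psi Z L" unfolding Kset_def by blast
    have rk: "\<forall>r\<in>Rt. mat_rank ({..<fst r} \<times> UNIV) ({..<fst r} \<times> UNIV) (Xblock (Psi Z L) r) \<le> rep_multiplicity \<theta> k W r"
      using X L(2) by blast
    obtain q where q: "q \<in> Ctheta \<theta>" "Psi Z (gram q) = Psi Z L" using supset[OF L(1) rk] by blast
    show "X \<in> (\<lambda>q :: 'g \<times> 'v \<Rightarrow> real^'d. Psi Z (gram q)) ` Ctheta \<theta>"
      by (rule image_eqI[where x=q]) (use q L(2) in auto)
  qed
qed

end
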